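(* Let $\alpha,\beta_1,\beta_2,\gamma_1,\gamma_2\in\widehat{\mathbb{F}_q^\times}$. (i) Suppose $\varepsilon\notin\{\alpha,\beta_2,\beta_1\overline{\gamma_1},\beta_2\overline{\gamma_2}\}$. Then for every $\lambda\in\mathbb{F}_q$, $$F_2\!\left({\alpha;\beta_1,\beta_2\atop\gamma_1,\gamma_2};\lambda,1\right)=\frac{(\overline{\beta_2}\gamma_2)_{\overline{\alpha}}}{(\gamma_2)^\circ_{\overline{\alpha}}}\,{}_3F_2\!\left({\alpha,\beta_1,\alpha\overline{\gamma_2}\atop\gamma_1,\alpha\beta_2\overline{\gamma_2}};\lambda\right).$$ (ii) Suppose $\varepsilon\notin\{\alpha,\beta_1,\beta_2,\beta_1\overline{\gamma_1},\beta_2\overline{\gamma_2}\}$. Then for every $\lambda\in\mathbb{F}_q\setminus\{1\}$, $$F_2\!\left({\alpha;\beta_1,\beta_2\atop\gamma_1,\gamma_2};\lambda,1-\lambda\right)=\frac{(\overline{\beta_2}\gamma_2)_{\overline{\alpha}}}{(\gamma_2)^\circ_{\overline{\alpha}}}\,\overline{\alpha}(1-\lambda)\,{}_3F_2\!\left({\alpha,\overline{\beta_1}\gamma_1,\alpha\overline{\gamma_2}\atop\gamma_1,\alpha\beta_2\overline{\gamma_2}};\frac{\lambda}{\lambda-1}\right).$$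
   Context: $\mathbb{F}_q$ is a finite field with $q$ elements. $\widehat{\mathbb{F}_q^\times}$ is the group of multiplicative characters $\mathbb{F}_q^\times\to\overline{\mathbb{Q}}^\times$, $\varepsilon$ the trivial character; every character (including $\varepsilon$) is extended by $0$ at $0$; $\overline{\eta}=\eta^{-1}$; $\delta(\eta)=1$ if $\eta=\varepsilon$, else $0$. $\psi$ is a fixed non-trivial additive character. $g(\eta)=-\sum_{x\in\mathbb{F}_q^\times}\psi(x)\eta(x)$, $g^\circ(\eta)=q^{\delta(\eta)}g(\eta)$, $(\alpha)_\nu=g(\alpha\nu)/g(\alpha)$, $(\alpha)^\circ_\nu=g^\circ(\alpha\nu)/g^\circ(\alpha)$. For $\lambda\in\mathbb{F}_q$, ${}_3F_2\!\left({\alpha_1,\alpha_2,\alpha_3\atop\beta_1,\beta_2};\lambda\right)=\frac{1}{1-q}\sum_{\nu}\frac{(\alpha_1)_\nu(\alpha_2)_\nu(\alpha_3)_\nu}{(\varepsilon)^\circ_\nu(\beta_1)^\circ_\nu(\beta_2)^\circ_\nu}\nu(\lambda)$; for $x,y\in\mathbb{F}_q$, $F_2\!\left({\alpha;\beta_1,\beta_2\atop\gamma_1,\gamma_2};x,y\right)=\frac{1}{(1-q)^2}\sum_{\nu_1,\nu_2}\frac{(\alpha)_{\nu_1\nu_2}(\beta_1)_{\nu_1}(\beta_2)_{\nu_2}}{(\gamma_1)^\circ_{\nu_1}(\gamma_2)^\circ_{\nu_2}(\varepsilon)^\circ_{\nu_1}(\varepsilon)^\circ_{\nu_2}}\nu_1(x)\nu_2(y)$,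 sums over characters. *)

theory Defs
  imports Complex_Main
begin

text \<open>Multiplicative characters of a finite field 'a, with values in complex numbers
  (a model of the algebraic closure of Q), extended by 0 at 0 (also the trivial one).\<close>

definition mult_chars :: "('a::{field,finite} \<Rightarrow> complex) set" where
  "mult_chars = {\<chi>. \<chi> 0 = 0 \<and> \<chi> 1 = 1 \<and> (\<forall>x y. \<chi> (x * y) = \<chi> x * \<chi> y)}"

definition eps_char :: "'a::{field,finite} \<Rightarrow> complex" where
  "eps_char x = (if x = 0 then 0 else 1)"

definition chmul :: "('a \<Rightarrow> complex) \<Rightarrow> ('a \<Rightarrow> complex) \<Rightarrow> 'a \<Rightarrow> complex" where
  "chmul \<chi> \<eta> x = \<chi> x * \<eta> x"

definition chinv :: "('a \<Rightarrow> complex) \<Rightarrow> 'a \<Rightarrow> complex" where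
  "chinv \<chi> x = inverse (\<chi> x)"

definition delta_char :: "('a::{field,finite} \<Rightarrow> complex) \<Rightarrow> nat" where
  "delta_char \<eta> = (if \<eta> = eps_char then 1 else 0)"

definition add_char :: "('a::{field,finite} \<Rightarrow> complex) \<Rightarrow> bool" where
  "add_char \<psi> \<longleftrightarrow> (\<forall>x y. \<psi> (x + y) = \<psi> x * \<psi> y) \<and> (\<forall>x. \<psi> x \<noteq> 0)"

definition gauss :: "('a::{field,finite} \<Rightarrow> complex) \<Rightarrow> ('a \<Rightarrow> complex) \<Rightarrow> complex" where
  "gauss \<psi> \<eta> = - (\<Sum>x\<in>UNIV - {0}. \<psi> x * \<eta> x)"

definition gauss0 :: "('a::{field,finite} \<Rightarrow> complex) \<Rightarrow> ('a \<Rightarrow> complex) \<Rightarrow> complex" where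
  "gauss0 \<psi> \<eta> = of_nat (card (UNIV::'a set)) ^ delta_char \<eta> * gauss \<psi> \<eta>"

definition poch :: "('a::{field,finite} \<Rightarrow> complex) \<Rightarrow> ('a \<Rightarrow> complex) \<Rightarrow> ('a \<Rightarrow> complex) \<Rightarrow> complex" where
  "poch \<psi> \<alpha> \<nu> = gauss \<psi> (chmul \<alpha> \<nu>) / gauss \<psi> \<alpha>"

definition poch0 :: "('a::{field,finite} \<Rightarrow> complex) \<Rightarrow> ('a \<Rightarrow> complex) \<Rightarrow> ('a \<Rightarrow> complex) \<Rightarrow> complex" where
  "poch0 \<psi> \<alpha> \<nu> = gauss0 \<psi> (chmul \<alpha> \<nu>) / gauss0 \<psi> \<alpha>"

definition hyp3F2 :: "('a::{field,finite} \<Rightarrow> complex) \<Rightarrow> ('a \<Rightarrow> complex) \<Rightarrow> ('a \<Rightarrow> complex)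
    \<Rightarrow> ('a \<Rightarrow> complex) \<Rightarrow> ('a \<Rightarrow> complex) \<Rightarrow> ('a \<Rightarrow> complex) \<Rightarrow> 'a \<Rightarrow> complex" where
  "hyp3F2 \<psi> a1 a2 a3 b1 b2 z =
     1 / (1 - of_nat (card (UNIV::'a set))) *
     (\<Sum>\<nu>\<in>mult_chars. poch \<psi> a1 \<nu> * poch \<psi> a2 \<nu> * poch \<psi> a3 \<nu>
        / (poch0 \<psi> eps_char \<nu> * poch0 \<psi> b1 \<nu> * poch0 \<psi> b2 \<nu>) * \<nu> z)"

definition appellF2 :: "('a::{field,finite} \<Rightarrow> complex) \<Rightarrow> ('a \<Rightarrow> complex) \<Rightarrow> ('a \<Rightarrow> complex)
    \<Rightarrow> ('a \<Rightarrow> complex) \<Rightarrow> ('a \<Rightarrow> complex) \<Rightarrow> ('a \<Rightarrow> complex) \<Rightarrow> 'a \<Rightarrow> 'a \<Rightarrow> complex" where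
  "appellF2 \<psi> a b1 b2 c1 c2 x y =
     1 / (1 - of_nat (card (UNIV::'a set)))^2 *
     (\<Sum>\<nu>1\<in>mult_chars. \<Sum>\<nu>2\<in>mult_chars.
        poch \<psi> a (chmul \<nu>1 \<nu>2) * poch \<psi> b1 \<nu>1 * poch \<psi> b2 \<nu>2
        / (poch0 \<psi> c1 \<nu>1 * poch0 \<psi> c2 \<nu>2 * poch0 \<psi> eps_char \<nu>1 * poch0 \<psi> eps_char \<nu>2)
        * \<nu>1 x * \<nu>2 y)"

end

theory Submission
  imports Defs "HOL-Algebra.Multiplicative_Group" "HOL-Algebra.Algebraic_Closure_Type"
begin


lemma mc_0: "\<chi> \<in> mult_chars \<Longrightarrow> \<chi> 0 = 0" by (simp add: mult_chars_def)
lemma mc_1: "\<chi> \<in> mult_chars \<Longrightarrow> \<chi> 1 = 1" by (simp add: mult_chars_def)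
lemma mc_mult: "\<chi> \<in> mult_chars \<Longrightarrow> \<chi> (x * y) = \<chi> x * \<chi> y" by (simp add: mult_chars_def)

lemma mc_nz: assumes "\<chi> \<in> mult_chars" "(x::'a::{field,finite}) \<noteq> 0" shows "\<chi> x \<noteq> 0"
proof
  assume "\<chi> x = 0"
  have "\<chi> (x * inverse x) = \<chi> x * \<chi> (inverse x)" using assms mc_mult by blast
  then show False using assms \<open>\<chi> x = 0\<close> mc_1 by force
qed

lemma mc_inverse: assumes "\<chi> \<in> mult_chars" shows "\<chi> (inverse (x::'a::{field,finite})) = inverse (\<chi> x)"
proof (cases "x = 0")
  case True then show ?thesis using mc_0[OF assms] by simp
next
  case False
  have "\<chi> (x * inverse x) = \<chi> x * \<chi> (inverse x)" using assms mc_mult by blast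
  then have "\<chi> x * \<chi> (inverse x) = 1" using False mc_1[OF assms] by simp
  then show ?thesis by (simp add: inverse_unique)
qed

lemma mc_divide: assumes "\<chi> \<in> mult_chars" shows "\<chi> ((x::'a::{field,finite}) / y) = \<chi> x / \<chi> y"
  by (simp add: divide_inverse mc_mult[OF assms] mc_inverse[OF assms])

lemma mc_m1: assumes "\<chi> \<in> mult_chars" shows "\<chi> (-1::'a::{field,finite}) * \<chi> (-1) = 1"
  by (metis assms mc_1 mc_mult mult_minus1_right minus_minus)

lemma mc_m1_inv: assumes "\<chi> \<in> mult_chars" shows "inverse (\<chi> (-1::'a::{field,finite})) = \<chi> (-1)"
  using mc_m1[OF assms] by (metis inverse_unique)

lemma mc_neg: assumes "\<chi> \<in> mult_chars" shows "\<chi> (- (x::'a::{field,finite})) = \<chi> (-1) * \<chi> x"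
  by (metis assms mc_mult mult_minus1)

lemma eps_in: "(eps_char :: 'a::{field,finite} \<Rightarrow> complex) \<in> mult_chars"
  by (auto simp: mult_chars_def eps_char_def)

lemma chmul_in: "\<chi> \<in> mult_chars \<Longrightarrow> \<eta> \<in> mult_chars \<Longrightarrow> chmul \<chi> \<eta> \<in> mult_chars"
  by (auto simp: mult_chars_def chmul_def)

lemma chinv_in: "\<chi> \<in> mult_chars \<Longrightarrow> chinv \<chi> \<in> mult_chars"
  by (auto simp: mult_chars_def chinv_def)

lemma chmul_comm: "chmul \<chi> \<eta> = chmul \<eta> \<chi>" by (auto simp: chmul_def fun_eq_iff)
lemma chmul_assoc: "chmul (chmul \<chi> \<eta>) \<mu> = chmul \<chi> (chmul \<eta> \<mu>)" by (auto simp: chmul_def fun_eq_iff)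

lemma chmul_eps: assumes "\<chi> \<in> mult_chars" shows "chmul eps_char \<chi> = \<chi>"
  using mc_0[OF assms] by (auto simp: chmul_def eps_char_def fun_eq_iff)

lemma chmul_chinv: assumes "\<chi> \<in> mult_chars" shows "chmul \<chi> (chinv \<chi>) = eps_char"
  using mc_0[OF assms] mc_nz[OF assms] by (auto simp: chmul_def chinv_def eps_char_def fun_eq_iff)

lemma chinv_chinv: "chinv (chinv \<chi>) = \<chi>" by (auto simp: chinv_def fun_eq_iff)
lemma chinv_chmul: "chinv (chmul \<chi> \<eta>) = chmul (chinv \<chi>) (chinv \<eta>)" by (auto simp: chinv_def chmul_def fun_eq_iff)
lemma chinv_eps: "chinv eps_char = eps_char" by (auto simp: chinv_def eps_char_def fun_eq_iff)

lemma chinv_eq_eps: "chinv \<chi> = eps_char \<longleftrightarrow> \<chi> = eps_char"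
  by (metis chinv_chinv chinv_eps)

lemma chinv_apply: "\<chi> \<in> mult_chars \<Longrightarrow> chinv \<chi> x = \<chi> (inverse x)"
  by (simp add: chinv_def mc_inverse)

lemma neq_eps: assumes "\<chi> \<in> mult_chars" "\<chi> \<noteq> eps_char" obtains a where "(a::'a::{field,finite}) \<noteq> 0" "\<chi> a \<noteq> 1"
proof -
  have "\<exists>a. a \<noteq> (0::'a) \<and> \<chi> a \<noteq> 1"
  proof (rule ccontr)
    assume "\<not> ?thesis"
    then have "\<chi> = eps_char" using mc_0[OF assms(1)] by (auto simp: eps_char_def fun_eq_iff)
    then show False using assms by simp
  qed
  then show ?thesis using that by blast
qed

lemma fermat: assumes "(x::'a::{field,finite}) \<noteq> 0" shows "x ^ (card (UNIV::'a set) - 1) = 1"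
proof -
  let ?U = "UNIV - {0::'a}"
  have bij: "bij_betw (\<lambda>y. x * y) ?U ?U"
    by (rule bij_betw_byWitness[where f'="\<lambda>y. inverse x * y"]) (use assms in auto)
  have "prod (\<lambda>y. x * y) ?U = prod id ?U"
    using prod.reindex_bij_betw[OF bij, of id] by simp
  moreover have "prod (\<lambda>y. x * y) ?U = x ^ card ?U * prod id ?U"
    by (simp add: prod.distrib)
  moreover have "prod id ?U \<noteq> 0" by (simp)
  moreover have "card ?U = card (UNIV::'a set) - 1" by (simp add: card_Diff_singleton)
  ultimately show ?thesis by simp
qed


lemma tring_pow: "x [^]\<^bsub>(ring_of_type_algebra :: 'a::field ring)\<^esub> (n::nat) = x ^ n"
  by (induction n) (simp_all add: ring_of_type_algebra_def)

lemma tring_carrier: "carrier (ring_of_type_algebra :: 'a::field ring) = UNIV"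
  by (simp add: ring_of_type_algebra_def)
lemma tring_zero: "\<zero>\<^bsub>(ring_of_type_algebra :: 'a::field ring)\<^esub> = 0"
  by (simp add: ring_of_type_algebra_def)

lemma generator_exists: "\<exists>g::'a::{field,finite}. g \<noteq> 0 \<and> (\<forall>x. x \<noteq> 0 \<longrightarrow> (\<exists>i::nat. x = g ^ i))"
proof -
  interpret F: field "ring_of_type_algebra :: 'a ring" by (rule field_from_type_algebra)
  have "finite (carrier (ring_of_type_algebra :: 'a ring))" by simp
  note G = F.finite_field_mult_group_has_gen[OF this]
  then have G2: "\<exists>a\<in>UNIV - {0::'a}. UNIV - {0} = {a ^ i |i. i \<in> UNIV}"
    unfolding Multiplicative_Group.carrier_mult_of Multiplicative_Group.nat_pow_mult_of tring_pow
      tring_carrier tring_zero .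
  then obtain a :: 'a where a: "a \<noteq> 0" and eq: "UNIV - {0} = {a ^ i |i. i \<in> UNIV}" by blast
  have "\<exists>i::nat. x = a ^ i" if "x \<noteq> 0" for x
  proof -
    have "x \<in> UNIV - {0}" using that by simp
    then have "x \<in> {a ^ i |i. i \<in> UNIV}" by (simp only: eq)
    then show ?thesis by simp
  qed
  then show ?thesis using a by blast
qed


lemma card_ge2: "card (UNIV::'a::{field,finite} set) \<ge> 2"
proof -
  have "card {0::'a, 1} \<le> card (UNIV::'a set)" by (rule card_mono) auto
  then show ?thesis by simp
qed

lemma card_nz: "card (UNIV - {0::'a::{field,finite}}) = card (UNIV::'a set) - 1"
  by (simp add: card_Diff_singleton)

lemma exists_sep_char:
  assumes t0: "(t::'a::{field,finite}) \<noteq> 0" and t1: "t \<noteq> 1"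
  shows "\<exists>\<chi>\<in>mult_chars. \<chi> t \<noteq> 1"
proof -
  define n where "n = card (UNIV::'a set) - 1"
  have npos: "n > 0" using card_ge2[where 'a='a] by (simp add: n_def)
  obtain g :: 'a where g0: "g \<noteq> 0" and gen: "\<And>x. x \<noteq> 0 \<Longrightarrow> \<exists>i::nat. x = g ^ i"
    using generator_exists by blast
  have gn: "g ^ n = 1" using fermat[OF g0] by (simp add: n_def)
  have gmod: "g ^ k = g ^ (k mod n)" for k
  proof -
    have "g ^ k = g ^ (n * (k div n) + k mod n)" by simp
    also have "\<dots> = (g ^ n) ^ (k div n) * g ^ (k mod n)" by (simp only: power_add power_mult)
    finally show ?thesis using gn by simp
  qed
  have img: "(\<lambda>i. g ^ i) ` {..<n} = UNIV - {0}"
  proof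
    show "(\<lambda>i. g ^ i) ` {..<n} \<subseteq> UNIV - {0}" using g0 by auto
    show "UNIV - {0} \<subseteq> (\<lambda>i. g ^ i) ` {..<n}"
    proof
      fix x assume "x \<in> UNIV - {0::'a}"
      then obtain i where "x = g ^ i" using gen by blast
      then have "x = g ^ (i mod n)" using gmod by simp
      moreover have "i mod n < n" using npos by simp
      ultimately show "x \<in> (\<lambda>i. g ^ i) ` {..<n}" by blast
    qed
  qed
  have inj: "inj_on (\<lambda>i. g ^ i) {..<n}"
  proof (rule eq_card_imp_inj_on)
    show "card ((\<lambda>i. g ^ i) ` {..<n}) = card {..<n}" by (simp only: img card_nz) (simp add: n_def)
  qed simp
  define dl where "dl x = (THE i. i < n \<and> g ^ i = x)" for x
  have dl_unique: "dl x = i" if "i < n" "g ^ i = x" for i x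
    unfolding dl_def
  proof (rule the_equality)
    show "i < n \<and> g ^ i = x" using that by simp
    fix j assume "j < n \<and> g ^ j = x"
    then show "j = i" using inj that unfolding inj_on_def by auto
  qed
  have dl_prop: "dl x < n \<and> g ^ dl x = x" if "x \<noteq> 0" for x
  proof -
    have "x \<in> (\<lambda>i. g ^ i) ` {..<n}" using that by (simp only: img) simp
    then obtain i where "i < n" "g ^ i = x" by auto
    then show ?thesis using dl_unique by simp
  qed
  define \<zeta> where "\<zeta> = cis (2 * pi / real n)"
  have zpow: "\<zeta> ^ k = cis (2 * pi * real k / real n)" for k
    unfolding \<zeta>_def DeMoivre by (simp add: field_simps)
  have zn: "\<zeta> ^ n = 1" using npos by (simp add: zpow complex_eq_iff)
  have zmod: "\<zeta> ^ k = \<zeta> ^ (k mod n)" for k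
  proof -
    have "\<zeta> ^ k = \<zeta> ^ (n * (k div n) + k mod n)" by simp
    also have "\<dots> = (\<zeta> ^ n) ^ (k div n) * \<zeta> ^ (k mod n)" by (simp only: power_add power_mult)
    finally show ?thesis using zn by simp
  qed
  have zinj: "inj_on (\<lambda>k. \<zeta> ^ k) {..<n}"
    using bij_betw_roots_unity[OF npos] unfolding bij_betw_def zpow by simp
  define \<chi> where "\<chi> x = (if x = 0 then 0 else \<zeta> ^ dl x)" for x
  have dl1: "dl 1 = 0" using dl_unique[of 0 1] npos by simp
  have dlmul: "dl (x * y) = (dl x + dl y) mod n" if "x \<noteq> 0" "y \<noteq> 0" for x y
  proof (rule dl_unique)
    show "(dl x + dl y) mod n < n" using npos by simp
    have "g ^ ((dl x + dl y) mod n) = g ^ (dl x + dl y)" using gmod by simp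
    also have "\<dots> = x * y" using dl_prop that by (simp add: power_add)
    finally show "g ^ ((dl x + dl y) mod n) = x * y" .
  qed
  have "\<chi> \<in> mult_chars"
    unfolding mult_chars_def
  proof (intro CollectI conjI allI)
    show "\<chi> 0 = 0" by (simp add: \<chi>_def)
    show "\<chi> 1 = 1" by (simp add: \<chi>_def dl1)
    fix x y :: 'a
    show "\<chi> (x * y) = \<chi> x * \<chi> y"
    proof (cases "x = 0 \<or> y = 0")
      case True then show ?thesis by (auto simp: \<chi>_def)
    next
      case False
      then have "\<chi> (x * y) = \<zeta> ^ ((dl x + dl y) mod n)" by (simp add: \<chi>_def dlmul)
      also have "\<dots> = \<zeta> ^ (dl x + dl y)" using zmod by metis
      finally show ?thesis using False by (simp add: \<chi>_def power_add)
    qed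
  qed
  moreover have "\<chi> t \<noteq> 1"
  proof
    assume "\<chi> t = 1"
    then have "\<zeta> ^ dl t = \<zeta> ^ 0" using t0 by (simp add: \<chi>_def)
    then have "dl t = 0" using inj_onD[OF zinj] dl_prop[OF t0] npos by simp
    then show False using dl_prop[OF t0] t1 by simp
  qed
  ultimately show ?thesis by blast
qed


lemma mc_pow: "\<chi> \<in> mult_chars \<Longrightarrow> \<chi> ((x::'a::{field,finite}) ^ k) = \<chi> x ^ k"
  by (induction k) (simp_all add: mc_1 mc_mult)

lemma chars_finite: "finite (mult_chars :: ('a::{field,finite} \<Rightarrow> complex) set)"
proof -
  define n where "n = card (UNIV::'a set) - 1"
  have npos: "n \<ge> 1" using card_ge2[where 'a='a] by (simp add: n_def)
  let ?B = "insert 0 {z::complex. z ^ n = 1}"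
  have n0: "n > 0" using npos by linarith
  have finR: "finite {z::complex. z ^ n = 1}" by (rule finite_nth_roots[OF n0])
  then have finB: "finite ?B" by simp
  have "mult_chars \<subseteq> {f. \<forall>x. (x \<in> (UNIV::'a set) \<longrightarrow> f x \<in> ?B) \<and> (x \<notin> UNIV \<longrightarrow> f x = 0)}"
  proof (intro subsetI CollectI allI conjI impI)
    fix \<chi> :: "'a \<Rightarrow> complex" and x :: 'a assume ch: "\<chi> \<in> mult_chars"
    show "\<chi> x \<in> ?B"
    proof (cases "x = 0")
      case True then show ?thesis using mc_0[OF ch] by simp
    next
      case False
      have "\<chi> x ^ n = \<chi> (x ^ n)" using mc_pow[OF ch] by simp
      also have "x ^ n = 1" using fermat[OF False] by (simp add: n_def)
      finally show ?thesis using mc_1[OF ch] by simp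
    qed
  qed simp
  moreover have "finite {f. \<forall>x. (x \<in> (UNIV::'a set) \<longrightarrow> f x \<in> ?B) \<and> (x \<notin> UNIV \<longrightarrow> f x = 0)}"
    by (rule finite_set_of_finite_funs) (simp_all add: finR)
  ultimately show ?thesis by (rule finite_subset)
qed

lemma sum_eps_x: "(\<Sum>x\<in>UNIV. eps_char (x::'a::{field,finite})) = of_nat (card (UNIV::'a set) - 1)"
proof -
  have "(\<Sum>x\<in>UNIV. eps_char (x::'a)) = eps_char (0::'a) + (\<Sum>x\<in>UNIV - {0::'a}. eps_char x)"
    using sum.remove[of "UNIV::'a set" 0 eps_char] by simp
  also have "\<dots> = (\<Sum>x\<in>UNIV - {0::'a}. 1)" by (simp add: eps_char_def)
  also have "\<dots> = of_nat (card (UNIV::'a set) - 1)" by (simp add: card_nz)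
  finally show ?thesis .
qed

lemma sum_char_x: assumes ch: "\<chi> \<in> mult_chars"
  shows "(\<Sum>x\<in>UNIV. \<chi> (x::'a::{field,finite})) = (if \<chi> = eps_char then of_nat (card (UNIV::'a set) - 1) else 0)"
proof (cases "\<chi> = eps_char")
  case True then show ?thesis using sum_eps_x by simp
next
  case False
  obtain a :: 'a where a0: "a \<noteq> 0" and a1: "\<chi> a \<noteq> 1" using neq_eps[OF ch False] by blast
  have bij: "bij_betw (\<lambda>x. a * x) UNIV UNIV"
    by (rule bij_betw_byWitness[where f'="\<lambda>y. inverse a * y"]) (use a0 in auto)
  have "(\<Sum>x\<in>UNIV. \<chi> (a * x)) = (\<Sum>x\<in>UNIV. \<chi> x)"
    using sum.reindex_bij_betw[OF bij, of \<chi>] by simp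
  moreover have "(\<Sum>x\<in>UNIV. \<chi> (a * x)) = \<chi> a * (\<Sum>x\<in>UNIV. \<chi> x)"
    by (simp add: mc_mult[OF ch] sum_distrib_left)
  ultimately have "(\<chi> a - 1) * (\<Sum>x\<in>UNIV. \<chi> x) = 0" by (simp add: algebra_simps)
  then show ?thesis using a1 False by simp
qed

lemma sum_chars_nonunit:
  assumes t0: "(t::'a::{field,finite}) \<noteq> 0" and t1: "t \<noteq> 1"
  shows "(\<Sum>\<nu>\<in>mult_chars. \<nu> t) = 0"
proof -
  obtain \<chi> where ch: "\<chi> \<in> mult_chars" and ct: "\<chi> t \<noteq> 1" using exists_sep_char[OF t0 t1] by blast
  have bij: "bij_betw (chmul \<chi>) mult_chars mult_chars"
  proof (rule bij_betw_byWitness[where f'="chmul (chinv \<chi>)"])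
    show "\<forall>a\<in>mult_chars. chmul (chinv \<chi>) (chmul \<chi> a) = a"
      using ch by (simp add: chmul_assoc[symmetric] chmul_comm[of "chinv \<chi>"] chmul_chinv chmul_eps)
    show "\<forall>a\<in>mult_chars. chmul \<chi> (chmul (chinv \<chi>) a) = a"
      using ch by (simp add: chmul_assoc[symmetric] chmul_chinv chmul_eps)
    show "chmul \<chi> ` mult_chars \<subseteq> mult_chars" using ch chmul_in by blast
    show "chmul (chinv \<chi>) ` mult_chars \<subseteq> mult_chars" using ch chmul_in chinv_in by blast
  qed
  have "(\<Sum>\<nu>\<in>mult_chars. chmul \<chi> \<nu> t) = (\<Sum>\<nu>\<in>mult_chars. \<nu> t)"
    using sum.reindex_bij_betw[OF bij, of "\<lambda>\<nu>. \<nu> t"] by simp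
  moreover have "(\<Sum>\<nu>\<in>mult_chars. chmul \<chi> \<nu> t) = \<chi> t * (\<Sum>\<nu>\<in>mult_chars. \<nu> t)"
    by (simp add: chmul_def sum_distrib_left)
  ultimately have "(\<chi> t - 1) * (\<Sum>\<nu>\<in>mult_chars. \<nu> t) = 0" by (simp add: algebra_simps)
  then show ?thesis using ct by simp
qed

lemma card_chars: "of_nat (card (mult_chars :: ('a::{field,finite} \<Rightarrow> complex) set)) = (of_nat (card (UNIV::'a set) - 1) :: complex)"
proof -
  let ?C = "mult_chars :: ('a \<Rightarrow> complex) set"
  have "(\<Sum>\<nu>\<in>?C. \<Sum>x\<in>UNIV. \<nu> x) = (\<Sum>\<nu>\<in>?C. if \<nu> = eps_char then of_nat (card (UNIV::'a set) - 1) else 0)"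
    by (rule sum.cong) (simp_all add: sum_char_x)
  also have "\<dots> = of_nat (card (UNIV::'a set) - 1)" using eps_in[where 'a='a] by (simp only: sum.delta[OF chars_finite]) simp
  finally have 1: "(\<Sum>\<nu>\<in>?C. \<Sum>x\<in>UNIV. \<nu> x) = of_nat (card (UNIV::'a set) - 1)" .
  have "(\<Sum>\<nu>\<in>?C. \<Sum>x\<in>UNIV. \<nu> x) = (\<Sum>x\<in>UNIV. \<Sum>\<nu>\<in>?C. \<nu> x)" by (rule sum.swap)
  also have "\<dots> = (\<Sum>x\<in>UNIV. if x = (1::'a) then of_nat (card ?C) else 0)"
  proof (rule sum.cong[OF refl])
    fix x :: 'a
    show "(\<Sum>\<nu>\<in>?C. \<nu> x) = (if x = 1 then of_nat (card ?C) else 0)"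
    proof (cases "x = 0 \<or> x = 1")
      case True then show ?thesis by (auto simp: mc_0 mc_1)
    next
      case False then show ?thesis using sum_chars_nonunit by auto
    qed
  qed
  also have "\<dots> = of_nat (card ?C)" by simp
  finally show ?thesis using 1 by simp
qed

lemma orth: "(\<Sum>\<nu>\<in>mult_chars. \<nu> (t::'a::{field,finite})) = (if t = 1 then of_nat (card (UNIV::'a set) - 1) else 0)"
proof (cases "t = 0 \<or> t = 1")
  case True
  then show ?thesis
  proof
    assume "t = 0" then show ?thesis by (simp add: mc_0)
  next
    assume "t = 1" then show ?thesis using card_chars[where 'a='a] by (simp add: mc_1)
  qed
next
  case False then show ?thesis using sum_chars_nonunit by auto
qed


definition jac :: "('a::{field,finite} \<Rightarrow> complex) \<Rightarrow> ('a \<Rightarrow> complex) \<Rightarrow> complex" where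
  "jac \<eta>1 \<eta>2 = (\<Sum>x\<in>UNIV. \<eta>1 x * \<eta>2 (1 - x))"

lemma jac_swap: "jac \<eta>1 \<eta>2 = jac \<eta>2 (\<eta>1 :: 'a::{field,finite} \<Rightarrow> complex)"
proof -
  have bij: "bij_betw (\<lambda>x::'a. 1 - x) UNIV UNIV"
    by (rule bij_betw_byWitness[where f'="\<lambda>x. 1 - x"]) auto
  show ?thesis unfolding jac_def
    using sum.reindex_bij_betw[OF bij, of "\<lambda>x. \<eta>1 x * \<eta>2 (1 - x)"] by (simp add: mult.commute)
qed

lemma jac_inv: assumes ch: "\<eta> \<in> mult_chars" and ne: "\<eta> \<noteq> eps_char"
  shows "jac \<eta> (chinv \<eta>) = - \<eta> (-1 :: 'a::{field,finite})"
proof -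
  have h1: "a / (1 - a) \<noteq> - 1" if "a \<noteq> 1" for a :: 'a
  proof
    assume a: "a / (1 - a) = - 1"
    have "1 - a \<noteq> 0" using that by simp
    with a have "a = a - 1" by (simp add: field_simps)
    then show False by simp
  qed
  have h2: "a / (1 + a) \<noteq> 1" if "a \<noteq> -1" for a :: 'a
  proof
    assume a: "a / (1 + a) = 1"
    have "1 + a \<noteq> 0" using that by (metis add.commute add_eq_0_iff)
    with a have "a = 1 + a" by (simp add: field_simps)
    then show False by simp
  qed
  have bij: "bij_betw (\<lambda>x::'a. x / (1 - x)) (UNIV - {1}) (UNIV - {-1})"
  proof (rule bij_betw_byWitness[where f'="\<lambda>u. u / (1 + u)"])
    show "\<forall>a\<in>UNIV - {1::'a}. a / (1 - a) / (1 + a / (1 - a)) = a"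
    proof
      fix a :: 'a assume "a \<in> UNIV - {1}"
      then have "1 - a \<noteq> 0" by simp
      then show "a / (1 - a) / (1 + a / (1 - a)) = a" by (simp add: field_simps)
    qed
    show "\<forall>a\<in>UNIV - {-1::'a}. a / (1 + a) / (1 - a / (1 + a)) = a"
    proof
      fix a :: 'a assume "a \<in> UNIV - {-1}"
      then have "1 + a \<noteq> 0" by (metis DiffD2 add.commute add_eq_0_iff singletonI)
      then show "a / (1 + a) / (1 - a / (1 + a)) = a" by (simp add: field_simps)
    qed
    show "(\<lambda>x. x / (1 - x)) ` (UNIV - {1::'a}) \<subseteq> UNIV - {- 1}" using h1 by auto
    show "(\<lambda>u. u / (1 + u)) ` (UNIV - {- 1::'a}) \<subseteq> UNIV - {1}" using h2 by auto
  qed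
  have pt: "\<eta> x * chinv \<eta> (1 - x) = \<eta> (x / (1 - x))" for x :: 'a
    by (simp add: chinv_def mc_mult[OF ch] mc_inverse[OF ch] divide_inverse)
  have "jac \<eta> (chinv \<eta>) = (\<Sum>x\<in>UNIV. \<eta> (x / (1 - x)))" unfolding jac_def pt ..
  also have "\<dots> = \<eta> (1 / (1 - 1)) + (\<Sum>x\<in>UNIV - {1}. \<eta> (x / (1 - x)))"
    using sum.remove[of "UNIV::'a set" 1 "\<lambda>x. \<eta> (x / (1 - x))"] by simp
  also have "\<eta> (1 / (1 - 1)) = 0" using mc_0[OF ch] by simp
  finally have 1: "jac \<eta> (chinv \<eta>) = (\<Sum>x\<in>UNIV - {1}. \<eta> (x / (1 - x)))" by simp
  have "(\<Sum>x\<in>UNIV - {1}. \<eta> (x / (1 - x))) = (\<Sum>u\<in>UNIV - {-1}. \<eta> u)"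
    using sum.reindex_bij_betw[OF bij, of \<eta>] by simp
  also have "\<dots> = (\<Sum>u\<in>UNIV. \<eta> u) - \<eta> (-1)"
    using sum.remove[of "UNIV::'a set" "-1" \<eta>] by simp
  also have "\<dots> = - \<eta> (-1)" using sum_char_x[OF ch] ne by simp
  finally show ?thesis using 1 by simp
qed


context
  fixes \<psi> :: "'a::{field,finite} \<Rightarrow> complex"
  assumes psi: "add_char \<psi>" "\<exists>x. \<psi> x \<noteq> 1"
begin

lemma psi_add: "\<psi> (x + y) = \<psi> x * \<psi> y" using psi by (simp add: add_char_def)

lemma psi0: "\<psi> 0 = 1"
proof -
  have "\<psi> 0 = \<psi> 0 * \<psi> 0" using psi_add[of 0 0] by simp
  moreover have "\<psi> 0 \<noteq> 0" using psi by (simp add: add_char_def)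
  ultimately show ?thesis by (metis mult_cancel_left2)
qed

lemma sum_psi: "(\<Sum>x\<in>UNIV. \<psi> x) = 0"
proof -
  obtain a where a: "\<psi> a \<noteq> 1" using psi by blast
  have bij: "bij_betw (\<lambda>x. a + x) UNIV UNIV"
    by (rule bij_betw_byWitness[where f'="\<lambda>y. y - a"]) auto
  have "(\<Sum>x\<in>UNIV. \<psi> (a + x)) = (\<Sum>x\<in>UNIV. \<psi> x)"
    using sum.reindex_bij_betw[OF bij, of \<psi>] by simp
  moreover have "(\<Sum>x\<in>UNIV. \<psi> (a + x)) = \<psi> a * (\<Sum>x\<in>UNIV. \<psi> x)"
    by (simp add: psi_add sum_distrib_left)
  ultimately have "(\<psi> a - 1) * (\<Sum>x\<in>UNIV. \<psi> x) = 0" by (simp add: algebra_simps)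
  then show ?thesis using a by simp
qed

lemma gauss_UNIV: assumes "\<eta> \<in> mult_chars" shows "gauss \<psi> \<eta> = - (\<Sum>x\<in>UNIV. \<psi> x * \<eta> x)"
proof -
  have "(\<Sum>x\<in>UNIV. \<psi> x * \<eta> x) = \<psi> 0 * \<eta> 0 + (\<Sum>x\<in>UNIV - {0}. \<psi> x * \<eta> x)"
    using sum.remove[of "UNIV::'a set" 0 "\<lambda>x. \<psi> x * \<eta> x"] by simp
  then show ?thesis using mc_0[OF assms] by (simp add: gauss_def)
qed

lemma gauss_eps: "gauss \<psi> eps_char = 1"
proof -
  have "gauss \<psi> eps_char = - (\<Sum>x\<in>UNIV. \<psi> x * eps_char x)" by (rule gauss_UNIV[OF eps_in])
  also have "(\<Sum>x\<in>UNIV. \<psi> x * eps_char x) = (\<Sum>x\<in>UNIV. \<psi> x) - \<psi> 0"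
  proof -
    have "(\<Sum>x\<in>UNIV. \<psi> x * eps_char x) = (\<Sum>x\<in>UNIV. \<psi> x - (if x = 0 then \<psi> 0 else 0))"
      by (rule sum.cong) (auto simp: eps_char_def)
    also have "\<dots> = (\<Sum>x\<in>UNIV. \<psi> x) - \<psi> 0" by (simp add: sum_subtractf)
    finally show ?thesis .
  qed
  finally show ?thesis by (simp add: sum_psi psi0)
qed

lemma gauss_product:
  assumes c1: "\<eta>1 \<in> mult_chars" and c2: "\<eta>2 \<in> mult_chars"
  shows "gauss \<psi> \<eta>1 * gauss \<psi> \<eta>2 = - jac \<eta>1 \<eta>2 * gauss \<psi> (chmul \<eta>1 \<eta>2)
     + \<eta>2 (-1) * of_nat (card (UNIV::'a set) - 1) * (if chmul \<eta>1 \<eta>2 = eps_char then 1 else 0)"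
proof -
  define I0 where "I0 = \<eta>2 (-1) * of_nat (card (UNIV::'a set) - 1) * (if chmul \<eta>1 \<eta>2 = eps_char then 1 else 0)"
  define J where "J = jac \<eta>1 \<eta>2"
  have c12: "chmul \<eta>1 \<eta>2 \<in> mult_chars" using c1 c2 by (rule chmul_in)
  have I: "(\<Sum>x\<in>UNIV. \<eta>1 x * \<eta>2 (s - x)) = chmul \<eta>1 \<eta>2 s * J + (if s = 0 then I0 else 0)" for s
  proof (cases "s = 0")
    case True
    have "(\<Sum>x\<in>UNIV. \<eta>1 x * \<eta>2 (s - x)) = (\<Sum>x\<in>UNIV. \<eta>2 (-1) * chmul \<eta>1 \<eta>2 x)"
    proof (intro sum.cong refl)
      fix x :: 'a
      have "\<eta>2 (s - x) = \<eta>2 (-1) * \<eta>2 x" using True mc_neg[OF c2, of x] by simp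
      then show "\<eta>1 x * \<eta>2 (s - x) = \<eta>2 (-1) * chmul \<eta>1 \<eta>2 x" by (simp add: chmul_def)
    qed
    also have "\<dots> = \<eta>2 (-1) * (\<Sum>x\<in>UNIV. chmul \<eta>1 \<eta>2 x)" by (simp add: sum_distrib_left)
    also have "\<dots> = I0" unfolding I0_def using sum_char_x[OF c12] by simp
    finally show ?thesis using True mc_0[OF c12] by simp
  next
    case False
    have bij: "bij_betw (\<lambda>u. s * u) UNIV UNIV"
      by (rule bij_betw_byWitness[where f'="\<lambda>y. inverse s * y"]) (use False in auto)
    have "(\<Sum>x\<in>UNIV. \<eta>1 x * \<eta>2 (s - x)) = (\<Sum>u\<in>UNIV. \<eta>1 (s * u) * \<eta>2 (s - s * u))"
      using sum.reindex_bij_betw[OF bij, of "\<lambda>x. \<eta>1 x * \<eta>2 (s - x)"] by simp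
    also have "\<dots> = (\<Sum>u\<in>UNIV. chmul \<eta>1 \<eta>2 s * (\<eta>1 u * \<eta>2 (1 - u)))"
    proof (intro sum.cong refl)
      fix u :: 'a
      have "s - s * u = s * (1 - u)" by (simp add: algebra_simps)
      then show "\<eta>1 (s * u) * \<eta>2 (s - s * u) = chmul \<eta>1 \<eta>2 s * (\<eta>1 u * \<eta>2 (1 - u))"
        by (simp add: mc_mult[OF c1] mc_mult[OF c2] chmul_def)
    qed
    also have "\<dots> = chmul \<eta>1 \<eta>2 s * J" by (simp add: J_def jac_def sum_distrib_left)
    finally show ?thesis using False by simp
  qed
  have "gauss \<psi> \<eta>1 * gauss \<psi> \<eta>2 = (\<Sum>x\<in>UNIV. \<psi> x * \<eta>1 x) * (\<Sum>y\<in>UNIV. \<psi> y * \<eta>2 y)"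
    by (simp add: gauss_UNIV[OF c1] gauss_UNIV[OF c2])
  also have "\<dots> = (\<Sum>x\<in>UNIV. \<Sum>y\<in>UNIV. \<psi> (x + y) * (\<eta>1 x * \<eta>2 y))"
    unfolding sum_product by (intro sum.cong refl) (simp add: psi_add mult_ac)
  also have "\<dots> = (\<Sum>x\<in>UNIV. \<Sum>s\<in>UNIV. \<psi> s * (\<eta>1 x * \<eta>2 (s - x)))"
  proof (rule sum.cong[OF refl])
    fix x :: 'a
    have bij: "bij_betw (\<lambda>s. s - x) UNIV UNIV"
      by (rule bij_betw_byWitness[where f'="\<lambda>y. y + x"]) auto
    show "(\<Sum>y\<in>UNIV. \<psi> (x + y) * (\<eta>1 x * \<eta>2 y)) = (\<Sum>s\<in>UNIV. \<psi> s * (\<eta>1 x * \<eta>2 (s - x)))"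
      using sum.reindex_bij_betw[OF bij, of "\<lambda>y. \<psi> (x + y) * (\<eta>1 x * \<eta>2 y)"] by simp
  qed
  also have "\<dots> = (\<Sum>s\<in>UNIV. \<psi> s * (\<Sum>x\<in>UNIV. \<eta>1 x * \<eta>2 (s - x)))"
    by (subst sum.swap) (simp add: sum_distrib_left)
  also have "\<dots> = (\<Sum>s\<in>UNIV. J * (\<psi> s * chmul \<eta>1 \<eta>2 s) + (if s = 0 then \<psi> 0 * I0 else 0))"
    by (intro sum.cong refl) (simp add: I algebra_simps)
  also have "\<dots> = J * (\<Sum>s\<in>UNIV. \<psi> s * chmul \<eta>1 \<eta>2 s) + I0"
    by (simp add: sum.distrib sum_distrib_left psi0)
  also have "\<dots> = - J * gauss \<psi> (chmul \<eta>1 \<eta>2) + I0"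
    by (simp add: gauss_UNIV[OF c12])
  finally show ?thesis by (simp add: J_def I0_def)
qed

end


lemma Q_ge: "card (UNIV::'a::{field,finite} set) \<ge> 1" using card_ge2[where 'a='a] by simp

lemma of_nat_qm1: "(of_nat (card (UNIV::'a::{field,finite} set) - 1) :: complex) = of_nat (card (UNIV::'a set)) - 1"
  using Q_ge[where 'a='a] by (simp add: of_nat_diff)

lemma of_nat_qm1': "(of_nat (card (UNIV::'a::{field,finite} set) - Suc 0) :: complex) = of_nat (card (UNIV::'a set)) - 1"
  using of_nat_qm1[where 'a='a] by simp

lemma Q_nz: "(of_nat (card (UNIV::'a::{field,finite} set)) :: complex) \<noteq> 0"
  using Q_ge[where 'a='a] by simp

lemma mc_m1_nz: "\<chi> \<in> mult_chars \<Longrightarrow> \<chi> (-1::'a::{field,finite}) \<noteq> 0"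
  by (rule mc_nz) simp_all

context
  fixes \<psi> :: "'a::{field,finite} \<Rightarrow> complex"
  assumes psi: "add_char \<psi>" "\<exists>x. \<psi> x \<noteq> 1"
begin

lemma gauss0_eps: "gauss0 \<psi> eps_char = of_nat (card (UNIV::'a set))"
  by (simp add: gauss0_def delta_char_def gauss_eps[OF psi])

lemma gauss0_neps: "\<eta> \<noteq> eps_char \<Longrightarrow> gauss0 \<psi> \<eta> = gauss \<psi> \<eta>"
  by (simp add: gauss0_def delta_char_def)

lemma gauss_refl: assumes ch: "\<eta> \<in> mult_chars"
  shows "gauss0 \<psi> \<eta> * gauss \<psi> (chinv \<eta>) = \<eta> (-1) * of_nat (card (UNIV::'a set))"
proof (cases "\<eta> = eps_char")
  case True
  then show ?thesis by (simp add: gauss0_eps chinv_eps gauss_eps[OF psi] eps_char_def)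
next
  case False
  have ci: "chinv \<eta> \<in> mult_chars" using ch by (rule chinv_in)
  have "gauss \<psi> \<eta> * gauss \<psi> (chinv \<eta>) = - jac \<eta> (chinv \<eta>) * gauss \<psi> eps_char
      + chinv \<eta> (-1) * of_nat (card (UNIV::'a set) - 1)"
    using gauss_product[OF psi ch ci] by (simp add: chmul_chinv[OF ch])
  also have "\<dots> = \<eta> (-1) + \<eta> (-1) * (of_nat (card (UNIV::'a set)) - 1)"
    by (simp add: jac_inv[OF ch False] gauss_eps[OF psi] chinv_def mc_m1_inv[OF ch] of_nat_qm1 of_nat_qm1')
  finally show ?thesis using False by (simp add: gauss0_neps algebra_simps)
qed

lemma gauss0_nz: assumes ch: "\<eta> \<in> mult_chars" shows "gauss0 \<psi> \<eta> \<noteq> 0"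
  using gauss_refl[OF ch] mc_m1_nz[OF ch] Q_nz[where 'a='a] by auto

lemma gauss_nz: assumes ch: "\<eta> \<in> mult_chars" shows "gauss \<psi> \<eta> \<noteq> 0"
proof -
  have "gauss0 \<psi> (chinv \<eta>) * gauss \<psi> (chinv (chinv \<eta>)) \<noteq> 0"
    using gauss_refl[OF chinv_in[OF ch]] mc_m1_nz[OF chinv_in[OF ch]] Q_nz[where 'a='a] by simp
  then show ?thesis by (simp add: chinv_chinv)
qed

lemma gauss_key:
  assumes c1: "\<eta>1 \<in> mult_chars" and c2: "\<eta>2 \<in> mult_chars" and ne: "\<eta>2 \<noteq> eps_char"
  shows "gauss \<psi> \<eta>1 * gauss \<psi> \<eta>2 = - jac \<eta>1 \<eta>2 * gauss0 \<psi> (chmul \<eta>1 \<eta>2)"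
proof (cases "chmul \<eta>1 \<eta>2 = eps_char")
  case False
  then show ?thesis using gauss_product[OF psi c1 c2] by (simp add: gauss0_neps)
next
  case True
  have "\<eta>1 = chmul \<eta>1 (chmul \<eta>2 (chinv \<eta>2))" using c1 by (simp add: chmul_chinv[OF c2] chmul_comm[of \<eta>1] chmul_eps)
  also have "\<dots> = chinv \<eta>2" using True c2 by (simp add: chmul_assoc[symmetric] chmul_eps chinv_in)
  finally have e1: "\<eta>1 = chinv \<eta>2" .
  have "jac \<eta>1 \<eta>2 = - \<eta>2 (-1)" using e1 jac_swap jac_inv[OF c2 ne] by metis
  then have "- jac \<eta>1 \<eta>2 * gauss0 \<psi> (chmul \<eta>1 \<eta>2) = \<eta>2 (-1) * of_nat (card (UNIV::'a set))"
    using True by (simp add: gauss0_eps)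
  moreover have "gauss \<psi> \<eta>1 * gauss \<psi> \<eta>2 = \<eta>2 (-1) + \<eta>2 (-1) * (of_nat (card (UNIV::'a set)) - 1)"
    using gauss_product[OF psi c1 c2] True \<open>jac \<eta>1 \<eta>2 = - \<eta>2 (-1)\<close>
    by (simp add: gauss_eps[OF psi] of_nat_qm1 of_nat_qm1')
  ultimately show ?thesis by (simp add: algebra_simps)
qed

end


lemma orth_sum:
  fixes F :: "'b \<Rightarrow> complex" and h :: "'b \<Rightarrow> 'a::{field,finite}"
  assumes "finite A"
  shows "(\<Sum>\<nu>\<in>mult_chars. \<Sum>x\<in>A. F x * \<nu> (h x)) = of_nat (card (UNIV::'a set) - 1) * (\<Sum>x\<in>A. F x * (if h x = 1 then 1 else 0))"
proof -
  have "(\<Sum>\<nu>\<in>mult_chars. \<Sum>x\<in>A. F x * \<nu> (h x)) = (\<Sum>x\<in>A. \<Sum>\<nu>\<in>mult_chars. F x * \<nu> (h x))"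
    by (rule sum.swap)
  also have "\<dots> = (\<Sum>x\<in>A. F x * (\<Sum>\<nu>\<in>mult_chars. \<nu> (h x)))" by (simp add: sum_distrib_left)
  also have "\<dots> = (\<Sum>x\<in>A. of_nat (card (UNIV::'a set) - 1) * (F x * (if h x = 1 then 1 else 0)))"
    by (rule sum.cong[OF refl]) (simp add: orth)
  also have "\<dots> = of_nat (card (UNIV::'a set) - 1) * (\<Sum>x\<in>A. F x * (if h x = 1 then 1 else 0))"
    by (simp add: sum_distrib_left)
  finally show ?thesis .
qed

lemma sum_delta_mult: "(\<Sum>x\<in>UNIV. F x * (if x = (c::'a::finite) then 1 else 0)) = (F c :: complex)"
proof -
  have "(\<Sum>x\<in>UNIV. F x * (if x = c then 1 else 0)) = (\<Sum>x\<in>UNIV. if x = c then F x else 0)"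
    by (rule sum.cong) auto
  then show ?thesis by simp
qed

definition Ssum :: "('a::{field,finite} \<Rightarrow> complex) \<Rightarrow> ('a \<Rightarrow> complex) \<Rightarrow> ('a \<Rightarrow> complex) \<Rightarrow> ('a \<Rightarrow> complex) \<Rightarrow> 'a \<Rightarrow> complex" where
  "Ssum \<psi> a b c z = (\<Sum>\<nu>\<in>mult_chars. poch \<psi> a \<nu> * poch \<psi> b \<nu> / (poch0 \<psi> c \<nu> * poch0 \<psi> eps_char \<nu>) * \<nu> z)"

definition Kc :: "('a::{field,finite} \<Rightarrow> complex) \<Rightarrow> ('a \<Rightarrow> complex) \<Rightarrow> ('a \<Rightarrow> complex) \<Rightarrow> complex" where
  "Kc \<psi> b c = - gauss0 \<psi> c / (gauss \<psi> b * gauss \<psi> (chmul (chinv b) c))"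

lemma chmul_cancel: assumes b: "b \<in> mult_chars" and n: "\<nu> \<in> mult_chars"
  shows "chmul (chmul b \<nu>) (chmul (chinv b) c) = chmul \<nu> (c::'a::{field,finite} \<Rightarrow> complex)"
proof (rule ext)
  fix x :: 'a
  show "chmul (chmul b \<nu>) (chmul (chinv b) c) x = chmul \<nu> c x"
  proof (cases "x = 0")
    case True then show ?thesis using mc_0[OF n] by (simp add: chmul_def)
  next
    case False then have "b x \<noteq> 0" using mc_nz[OF b] by simp
    then show ?thesis by (simp add: chmul_def chinv_def field_simps)
  qed
qed


lemma chmul_eps_r: "\<chi> \<in> mult_chars \<Longrightarrow> chmul \<chi> eps_char = \<chi>"
  by (simp add: chmul_comm chmul_eps)

lemma chmul_inv_cancel: assumes "a \<in> mult_chars" "\<nu> \<in> mult_chars"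
  shows "chmul (chmul a \<nu>) (chinv \<nu>) = a"
  using assms by (simp add: chmul_assoc chmul_chinv chmul_eps_r)

context
  fixes \<psi> :: "'a::{field,finite} \<Rightarrow> complex"
  assumes psi: "add_char \<psi>" "\<exists>x. \<psi> x \<noteq> 1"
begin

lemma R1:
  assumes a: "a \<in> mult_chars" and n: "\<nu> \<in> mult_chars"
  shows "poch \<psi> a \<nu> / poch0 \<psi> eps_char \<nu> =
    of_nat (card (UNIV::'a set) - 1) * (if a = eps_char then 1 else 0) - (\<Sum>y\<in>UNIV. a y * \<nu> (y / (y - 1)))"
proof -
  define Q :: complex where "Q = of_nat (card (UNIV::'a set))"
  define s where "s = \<nu> (-1)"
  define Jv where "Jv = jac (chmul a \<nu>) (chinv \<nu>)"
  define D :: complex where "D = of_nat (card (UNIV::'a set) - 1) * (if a = eps_char then 1 else 0)"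
  have an: "chmul a \<nu> \<in> mult_chars" using a n by (rule chmul_in)
  have ni: "chinv \<nu> \<in> mult_chars" using n by (rule chinv_in)
  have Qnz: "Q \<noteq> 0" unfolding Q_def by (rule Q_nz)
  have ss: "s * s = 1" unfolding s_def by (rule mc_m1[OF n])
  have si: "chinv \<nu> (-1) = s" unfolding s_def chinv_def by (rule mc_m1_inv[OF n])
  have Ganz: "gauss \<psi> a \<noteq> 0" by (rule gauss_nz[OF psi a])
  have G0nz: "gauss0 \<psi> \<nu> \<noteq> 0" by (rule gauss0_nz[OF psi n])
  have p0e: "poch0 \<psi> eps_char \<nu> = gauss0 \<psi> \<nu> / Q"
    by (simp add: poch0_def chmul_eps[OF n] gauss0_eps[OF psi] Q_def)
  have rf: "gauss0 \<psi> \<nu> * gauss \<psi> (chinv \<nu>) = s * Q"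
    unfolding s_def Q_def by (rule gauss_refl[OF psi n])
  have pr: "gauss \<psi> (chmul a \<nu>) * gauss \<psi> (chinv \<nu>) = - Jv * gauss \<psi> a + s * D"
    using gauss_product[OF psi an ni] unfolding chmul_inv_cancel[OF a n] Jv_def D_def si by simp
  have DG: "D / gauss \<psi> a = D"
    by (cases "a = eps_char") (simp_all add: D_def gauss_eps[OF psi])
  have "poch \<psi> a \<nu> / poch0 \<psi> eps_char \<nu> = gauss \<psi> (chmul a \<nu>) * Q / (gauss \<psi> a * gauss0 \<psi> \<nu>)"
    using Qnz G0nz by (simp add: poch_def p0e field_simps)
  also have "\<dots> = gauss \<psi> (chmul a \<nu>) * gauss \<psi> (chinv \<nu>) * s / gauss \<psi> a"
  proof -
    have "Q = s * (gauss0 \<psi> \<nu> * gauss \<psi> (chinv \<nu>))" using rf ss by (metis mult.assoc mult_1)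
    then show ?thesis using G0nz Ganz by (simp add: field_simps)
  qed
  also have "\<dots> = - s * Jv + (s * s) * (D / gauss \<psi> a)"
    unfolding pr using Ganz by (simp add: field_simps)
  also have "\<dots> = D - s * Jv" using ss DG by simp
  also have "s * Jv = (\<Sum>y\<in>UNIV. a y * \<nu> (y / (y - 1)))"
  proof -
    have "s * Jv = (\<Sum>y\<in>UNIV. s * (a y * \<nu> y * inverse (\<nu> (1 - y))))"
      by (simp add: Jv_def jac_def chmul_def chinv_def sum_distrib_left)
    also have "\<dots> = (\<Sum>y\<in>UNIV. a y * \<nu> (y / (y - 1)))"
    proof (rule sum.cong[OF refl])
      fix y :: 'a
      have h: "\<nu> (y - 1) = s * \<nu> (1 - y)" using mc_neg[OF n, of "1 - y"] by (simp add: s_def)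
      have "\<nu> (y / (y - 1)) = \<nu> y / \<nu> (y - 1)" by (rule mc_divide[OF n])
      also have "\<dots> = \<nu> y * inverse (s * \<nu> (1 - y))" by (simp only: h divide_inverse)
      also have "inverse (s * \<nu> (1 - y)) = s * inverse (\<nu> (1 - y))"
        using ss by (simp add: inverse_mult_distrib) (metis inverse_unique)
      finally show "s * (a y * \<nu> y * inverse (\<nu> (1 - y))) = a y * \<nu> (y / (y - 1))" by (simp add: mult_ac)
    qed
    finally show ?thesis .
  qed
  finally show ?thesis by (simp add: D_def)
qed

lemma R2:
  assumes b: "b \<in> mult_chars" and c: "c \<in> mult_chars" and n: "\<nu> \<in> mult_chars"
    and ne: "chmul (chinv b) c \<noteq> eps_char"
  shows "poch \<psi> b \<nu> / poch0 \<psi> c \<nu> = Kc \<psi> b c * (\<Sum>x\<in>UNIV. b x * chmul (chinv b) c (1 - x) * \<nu> x)"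
proof -
  define B where "B = chmul (chinv b) c"
  have Bc: "B \<in> mult_chars" unfolding B_def using b c by (simp add: chmul_in chinv_in)
  have bn: "chmul b \<nu> \<in> mult_chars" using b n by (rule chmul_in)
  have key: "gauss \<psi> (chmul b \<nu>) * gauss \<psi> B = - jac (chmul b \<nu>) B * gauss0 \<psi> (chmul c \<nu>)"
    using gauss_key[OF psi bn Bc ne[folded B_def]] unfolding B_def chmul_cancel[OF b n] chmul_comm[of \<nu> c] .
  have GBnz: "gauss \<psi> B \<noteq> 0" by (rule gauss_nz[OF psi Bc])
  have Gbnz: "gauss \<psi> b \<noteq> 0" by (rule gauss_nz[OF psi b])
  have G0c: "gauss0 \<psi> c \<noteq> 0" by (rule gauss0_nz[OF psi c])
  have G0cn: "gauss0 \<psi> (chmul c \<nu>) \<noteq> 0" by (rule gauss0_nz[OF psi chmul_in[OF c n]])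
  have "poch \<psi> b \<nu> / poch0 \<psi> c \<nu> = gauss \<psi> (chmul b \<nu>) * gauss0 \<psi> c / (gauss \<psi> b * gauss0 \<psi> (chmul c \<nu>))"
    using G0c G0cn Gbnz by (simp add: poch_def poch0_def field_simps)
  also have "gauss \<psi> (chmul b \<nu>) = - jac (chmul b \<nu>) B * gauss0 \<psi> (chmul c \<nu>) / gauss \<psi> B"
    using key GBnz by (simp add: field_simps)
  finally have "poch \<psi> b \<nu> / poch0 \<psi> c \<nu> = Kc \<psi> b c * jac (chmul b \<nu>) B"
    using G0cn GBnz Gbnz by (simp add: Kc_def B_def field_simps)
  also have "jac (chmul b \<nu>) B = (\<Sum>x\<in>UNIV. b x * B (1 - x) * \<nu> x)"
    unfolding jac_def chmul_def by (simp add: mult_ac)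
  finally show ?thesis by (simp add: B_def)
qed

end


lemma equiv_y:
  fixes x y z :: "'a::field"
  assumes x: "x \<noteq> 0" and z: "z \<noteq> 0" and y: "y \<noteq> 0"
  shows "(y / (y - 1) * (x * z) = 1) \<longleftrightarrow> (y = inverse (1 - z * x))"
proof (cases "y = 1")
  case True
  then show ?thesis using x z by auto
next
  case False
  then have y1: "y - 1 \<noteq> 0" by simp
  show ?thesis
  proof (cases "1 - z * x = 0")
    case True
    then have zx: "z * x = 1" by simp
    have "y / (y - 1) * (x * z) \<noteq> 1"
    proof
      assume "y / (y - 1) * (x * z) = 1"
      then have "y * (x * z) = y - 1" using y1 by (simp add: field_simps)
      then show False using zx by (simp add: mult.commute)
    qed
    then show ?thesis using True y by simp
  next
    case False
    have "(y / (y - 1) * (x * z) = 1) \<longleftrightarrow> y * (x * z) = y - 1" using y1 by (simp add: field_simps)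
    also have "\<dots> \<longleftrightarrow> y * (1 - z * x) = 1" by (auto simp: algebra_simps)
    also have "\<dots> \<longleftrightarrow> y = inverse (1 - z * x)" using False by (auto simp: field_simps)
    finally show ?thesis .
  qed
qed

context
  fixes \<psi> :: "'a::{field,finite} \<Rightarrow> complex"
  assumes psi: "add_char \<psi>" "\<exists>x. \<psi> x \<noteq> 1"
begin

lemma S_formula:
  assumes a: "a \<in> mult_chars" and b: "b \<in> mult_chars" and c: "c \<in> mult_chars"
    and ne: "chmul (chinv b) c \<noteq> eps_char" and z: "z \<noteq> 0"
  shows "Ssum \<psi> a b c z = Kc \<psi> b c * of_nat (card (UNIV::'a set) - 1) *
     (of_nat (card (UNIV::'a set) - 1) * (if a = eps_char then 1 else 0) * (b (inverse z) * chmul (chinv b) c (1 - inverse z))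
      - (\<Sum>x\<in>UNIV. b x * chmul (chinv b) c (1 - x) * a (inverse (1 - z * x))))"
proof -
  define B where "B = chmul (chinv b) c"
  define W where "W x = b x * B (1 - x)" for x
  define D0 :: complex where "D0 = of_nat (card (UNIV::'a set) - 1) * (if a = eps_char then 1 else 0)"
  define K where "K = Kc \<psi> b c"
  define f :: "'a \<Rightarrow> 'a" where "f y = y / (y - 1)" for y
  define qm :: complex where "qm = of_nat (card (UNIV::'a set) - 1)"
  define Om where "Om t = qm * (if t = 1 then 1 else 0)" for t :: 'a
  have W0: "W 0 = 0" using mc_0[OF b] by (simp add: W_def)
  have A0: "a 0 = 0" using mc_0[OF a] .
  have step1: "Ssum \<psi> a b c z = (\<Sum>\<nu>\<in>mult_chars. K * (\<Sum>x\<in>UNIV. W x * (D0 * \<nu> (x * z) - (\<Sum>y\<in>UNIV. a y * \<nu> (f y * (x * z))))))"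
    unfolding Ssum_def
  proof (rule sum.cong[OF refl])
    fix \<nu> :: "'a \<Rightarrow> complex" assume n: "\<nu> \<in> mult_chars"
    have "poch \<psi> a \<nu> * poch \<psi> b \<nu> / (poch0 \<psi> c \<nu> * poch0 \<psi> eps_char \<nu>) * \<nu> z
        = (poch \<psi> a \<nu> / poch0 \<psi> eps_char \<nu>) * (poch \<psi> b \<nu> / poch0 \<psi> c \<nu>) * \<nu> z"
      by (simp add: divide_inverse mult_ac)
    also have "\<dots> = (D0 - (\<Sum>y\<in>UNIV. a y * \<nu> (f y))) * (K * (\<Sum>x\<in>UNIV. W x * \<nu> x)) * \<nu> z"
      unfolding R1[OF psi a n] R2[OF psi b c n ne] D0_def K_def W_def B_def f_def by simp
    also have "\<dots> = K * (\<Sum>x\<in>UNIV. W x * (D0 * \<nu> (x * z) - (\<Sum>y\<in>UNIV. a y * \<nu> (f y * (x * z)))))"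
    proof -
      have pt: "W x * (D0 * \<nu> (x * z) - (\<Sum>y\<in>UNIV. a y * \<nu> (f y * (x * z))))
          = (W x * \<nu> x) * (\<nu> z * (D0 - (\<Sum>y\<in>UNIV. a y * \<nu> (f y))))" for x
      proof -
        have "(\<Sum>y\<in>UNIV. a y * \<nu> (f y * (x * z))) = (\<Sum>y\<in>UNIV. a y * \<nu> (f y)) * (\<nu> x * \<nu> z)"
          by (simp add: mc_mult[OF n] sum_distrib_left sum_distrib_right mult_ac)
        then show ?thesis by (simp add: mc_mult[OF n] algebra_simps)
      qed
      show ?thesis unfolding pt sum_distrib_right[symmetric] by (simp add: mult_ac)
    qed
    finally show "poch \<psi> a \<nu> * poch \<psi> b \<nu> / (poch0 \<psi> c \<nu> * poch0 \<psi> eps_char \<nu>) * \<nu> z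
        = K * (\<Sum>x\<in>UNIV. W x * (D0 * \<nu> (x * z) - (\<Sum>y\<in>UNIV. a y * \<nu> (f y * (x * z)))))" .
  qed
  have inner: "(\<Sum>\<nu>\<in>mult_chars. W x * (D0 * \<nu> (x * z) - (\<Sum>y\<in>UNIV. a y * \<nu> (f y * (x * z)))))
      = W x * (D0 * Om (x * z) - (\<Sum>y\<in>UNIV. a y * Om (f y * (x * z))))" for x
  proof -
    have e1: "(\<Sum>\<nu>\<in>mult_chars. \<nu> (x * z)) = Om (x * z)" by (simp add: orth Om_def qm_def)
    have e2: "(\<Sum>\<nu>\<in>mult_chars. \<Sum>y\<in>UNIV. a y * \<nu> (f y * (x * z))) = (\<Sum>y\<in>UNIV. a y * Om (f y * (x * z)))"
      by (subst orth_sum) (simp_all add: Om_def qm_def sum_distrib_left mult_ac)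
    have "(\<Sum>\<nu>\<in>mult_chars. W x * (D0 * \<nu> (x * z) - (\<Sum>y\<in>UNIV. a y * \<nu> (f y * (x * z)))))
        = W x * (D0 * (\<Sum>\<nu>\<in>mult_chars. \<nu> (x * z)) - (\<Sum>\<nu>\<in>mult_chars. \<Sum>y\<in>UNIV. a y * \<nu> (f y * (x * z))))"
      by (simp add: sum_distrib_left sum_subtractf right_diff_distrib)
    then show ?thesis by (simp only: e1 e2)
  qed
  have step2: "Ssum \<psi> a b c z = K * (\<Sum>x\<in>UNIV. W x * (D0 * Om (x * z) - (\<Sum>y\<in>UNIV. a y * Om (f y * (x * z)))))"
    unfolding step1 sum_distrib_left[symmetric]
    by (subst sum.swap) (simp add: inner)
  have t1: "(\<Sum>x\<in>UNIV. W x * D0 * Om (x * z)) = qm * D0 * W (inverse z)"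
  proof -
    have "(\<Sum>x\<in>UNIV. W x * D0 * Om (x * z)) = (\<Sum>x\<in>UNIV. (qm * D0 * W x) * (if x = inverse z then 1 else 0))"
    proof (rule sum.cong[OF refl])
      fix x :: 'a
      have "(x * z = 1) = (x = inverse z)" using z by (auto simp: field_simps)
      then show "W x * D0 * Om (x * z) = (qm * D0 * W x) * (if x = inverse z then 1 else 0)"
        by (simp add: Om_def)
    qed
    also have "\<dots> = qm * D0 * W (inverse z)" by (rule sum_delta_mult)
    finally show ?thesis .
  qed
  have t2: "(\<Sum>x\<in>UNIV. W x * (\<Sum>y\<in>UNIV. a y * Om (f y * (x * z)))) = qm * (\<Sum>x\<in>UNIV. W x * a (inverse (1 - z * x)))"
  proof -
    have "(\<Sum>x\<in>UNIV. W x * (\<Sum>y\<in>UNIV. a y * Om (f y * (x * z)))) = (\<Sum>x\<in>UNIV. qm * (W x * a (inverse (1 - z * x))))"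
    proof (rule sum.cong[OF refl])
      fix x :: 'a
      show "W x * (\<Sum>y\<in>UNIV. a y * Om (f y * (x * z))) = qm * (W x * a (inverse (1 - z * x)))"
      proof (cases "x = 0")
        case True then show ?thesis using W0 by simp
      next
        case False
        have "(\<Sum>y\<in>UNIV. a y * Om (f y * (x * z))) = (\<Sum>y\<in>UNIV. (qm * a y) * (if y = inverse (1 - z * x) then 1 else 0))"
        proof (rule sum.cong[OF refl])
          fix y :: 'a
          show "a y * Om (f y * (x * z)) = (qm * a y) * (if y = inverse (1 - z * x) then 1 else 0)"
          proof (cases "y = 0")
            case True then show ?thesis using A0 by simp
          next
            case False
            then show ?thesis using equiv_y[OF \<open>x \<noteq> 0\<close> z False] by (simp add: Om_def f_def)
          qed
        qed
        also have "\<dots> = qm * a (inverse (1 - z * x))" by (rule sum_delta_mult)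
        finally show ?thesis by simp
      qed
    qed
    then show ?thesis by (simp add: sum_distrib_left)
  qed
  have "Ssum \<psi> a b c z = K * ((\<Sum>x\<in>UNIV. W x * D0 * Om (x * z)) - (\<Sum>x\<in>UNIV. W x * (\<Sum>y\<in>UNIV. a y * Om (f y * (x * z)))))"
    unfolding step2 by (simp add: right_diff_distrib sum_subtractf mult.assoc)
  also have "\<dots> = K * qm * (D0 * W (inverse z) - (\<Sum>x\<in>UNIV. W x * a (inverse (1 - z * x))))"
    unfolding t1 t2 by (simp add: algebra_simps)
  finally show ?thesis by (simp add: K_def qm_def D0_def W_def B_def)
qed

end


context
  fixes \<psi> :: "'a::{field,finite} \<Rightarrow> complex"
  assumes psi: "add_char \<psi>" "\<exists>x. \<psi> x \<noteq> 1"
begin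

lemma poch_split: assumes a: "\<alpha> \<in> mult_chars" and n1: "\<nu>1 \<in> mult_chars"
  shows "poch \<psi> \<alpha> (chmul \<nu>1 \<nu>2) = poch \<psi> \<alpha> \<nu>1 * poch \<psi> (chmul \<alpha> \<nu>1) \<nu>2"
proof -
  have "gauss \<psi> (chmul \<alpha> \<nu>1) \<noteq> 0" by (rule gauss_nz[OF psi chmul_in[OF a n1]])
  then show ?thesis by (simp add: poch_def chmul_assoc)
qed

lemma F2_nu1:
  assumes a: "\<alpha> \<in> mult_chars"
  shows "appellF2 \<psi> \<alpha> b1 b2 c1 c2 x y = 1 / (1 - of_nat (card (UNIV::'a set)))^2 *
    (\<Sum>\<nu>1\<in>mult_chars. poch \<psi> \<alpha> \<nu>1 * poch \<psi> b1 \<nu>1 / (poch0 \<psi> c1 \<nu>1 * poch0 \<psi> eps_char \<nu>1) * \<nu>1 x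
        * Ssum \<psi> (chmul \<alpha> \<nu>1) b2 c2 y)"
  unfolding appellF2_def
proof (intro arg_cong2[where f="(*)"] refl sum.cong)
  fix \<nu>1 :: "'a \<Rightarrow> complex" assume n1: "\<nu>1 \<in> mult_chars"
  show "(\<Sum>\<nu>2\<in>mult_chars. poch \<psi> \<alpha> (chmul \<nu>1 \<nu>2) * poch \<psi> b1 \<nu>1 * poch \<psi> b2 \<nu>2 /
            (poch0 \<psi> c1 \<nu>1 * poch0 \<psi> c2 \<nu>2 * poch0 \<psi> eps_char \<nu>1 * poch0 \<psi> eps_char \<nu>2) * \<nu>1 x * \<nu>2 y)
     = poch \<psi> \<alpha> \<nu>1 * poch \<psi> b1 \<nu>1 / (poch0 \<psi> c1 \<nu>1 * poch0 \<psi> eps_char \<nu>1) * \<nu>1 x * Ssum \<psi> (chmul \<alpha> \<nu>1) b2 c2 y"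
    unfolding Ssum_def sum_distrib_left poch_split[OF a n1]
    by (rule sum.cong[OF refl]) (simp add: divide_inverse mult_ac)
qed

lemma F2_nu2:
  assumes a: "\<alpha> \<in> mult_chars"
  shows "appellF2 \<psi> \<alpha> b1 b2 c1 c2 x y = 1 / (1 - of_nat (card (UNIV::'a set)))^2 *
    (\<Sum>\<nu>2\<in>mult_chars. poch \<psi> \<alpha> \<nu>2 * poch \<psi> b2 \<nu>2 / (poch0 \<psi> c2 \<nu>2 * poch0 \<psi> eps_char \<nu>2) * \<nu>2 y
        * Ssum \<psi> (chmul \<alpha> \<nu>2) b1 c1 x)"
  unfolding appellF2_def
  apply (subst sum.swap)
proof (intro arg_cong2[where f="(*)"] refl sum.cong)
  fix \<nu>2 :: "'a \<Rightarrow> complex" assume n2: "\<nu>2 \<in> mult_chars"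
  show "(\<Sum>\<nu>1\<in>mult_chars. poch \<psi> \<alpha> (chmul \<nu>1 \<nu>2) * poch \<psi> b1 \<nu>1 * poch \<psi> b2 \<nu>2 /
            (poch0 \<psi> c1 \<nu>1 * poch0 \<psi> c2 \<nu>2 * poch0 \<psi> eps_char \<nu>1 * poch0 \<psi> eps_char \<nu>2) * \<nu>1 x * \<nu>2 y)
     = poch \<psi> \<alpha> \<nu>2 * poch \<psi> b2 \<nu>2 / (poch0 \<psi> c2 \<nu>2 * poch0 \<psi> eps_char \<nu>2) * \<nu>2 y * Ssum \<psi> (chmul \<alpha> \<nu>2) b1 c1 x"
    unfolding Ssum_def sum_distrib_left chmul_comm[of _ \<nu>2] poch_split[OF a n2]
    by (rule sum.cong[OF refl]) (simp add: divide_inverse mult_ac)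
qed

end


lemma fi1: "chinv (chmul (chmul (chmul \<alpha> \<beta>) (chinv \<gamma>)) \<nu>) = chmul (chinv (chmul \<alpha> \<nu>)) (chmul (chinv \<beta>) \<gamma>)"
  by (simp add: fun_eq_iff chmul_def chinv_def inverse_mult_distrib mult_ac)

lemma fi3: "chmul (chmul (chinv \<beta>) \<gamma>) (chinv \<alpha>) = chinv (chmul (chmul \<alpha> \<beta>) (chinv \<gamma>))"
  by (simp add: fun_eq_iff chmul_def chinv_def inverse_mult_distrib mult_ac)

lemma fi4: "chmul \<gamma> (chinv \<alpha>) = chinv (chmul \<alpha> (chinv \<gamma>))"
  by (simp add: fun_eq_iff chmul_def chinv_def inverse_mult_distrib mult_ac)

lemma fi5: "chmul (chinv \<beta>) \<gamma> = chinv (chmul \<beta> (chinv \<gamma>))"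
  by (simp add: fun_eq_iff chmul_def chinv_def inverse_mult_distrib mult_ac)

lemma fi2: assumes a: "\<alpha> \<in> mult_chars" and b: "\<beta> \<in> mult_chars"
  shows "chmul (chmul (chinv (chmul \<alpha> \<nu>)) (chmul (chinv \<beta>) \<gamma>)) \<beta> = chinv (chmul (chmul \<alpha> (chinv \<gamma>)) (\<nu> :: 'a::{field,finite} \<Rightarrow> complex))"
proof (rule ext)
  fix x :: 'a
  show "chmul (chmul (chinv (chmul \<alpha> \<nu>)) (chmul (chinv \<beta>) \<gamma>)) \<beta> x = chinv (chmul (chmul \<alpha> (chinv \<gamma>)) \<nu>) x"
  proof (cases "x = 0")
    case True then show ?thesis using mc_0[OF a] mc_0[OF b] by (simp add: chmul_def chinv_def)
  next
    case False then have "\<beta> x \<noteq> 0" by (rule mc_nz[OF b])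
    then show ?thesis by (simp add: chmul_def chinv_def inverse_mult_distrib field_simps)
  qed
qed

lemma fi6: assumes g: "\<gamma> \<in> mult_chars" and b: "\<beta> \<in> mult_chars"
  shows "chmul (chinv (chmul (chinv \<beta>) \<gamma>)) \<gamma> = (\<beta> :: 'a::{field,finite} \<Rightarrow> complex)"
proof (rule ext)
  fix x :: 'a
  show "chmul (chinv (chmul (chinv \<beta>) \<gamma>)) \<gamma> x = \<beta> x"
  proof (cases "x = 0")
    case True then show ?thesis using mc_0[OF g] mc_0[OF b] by (simp add: chmul_def chinv_def)
  next
    case False then have "\<gamma> x \<noteq> 0" by (rule mc_nz[OF g])
    then show ?thesis by (simp add: chmul_def chinv_def inverse_mult_distrib field_simps)
  qed
qed

lemma chinv_m1: "\<chi> \<in> mult_chars \<Longrightarrow> chinv \<chi> (-1::'a::{field,finite}) = \<chi> (-1)"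
  by (simp add: chinv_def mc_m1_inv)

context
  fixes \<psi> :: "'a::{field,finite} \<Rightarrow> complex"
  assumes psi: "add_char \<psi>" "\<exists>x. \<psi> x \<noteq> 1"
begin

lemma gauss_sum1:
  assumes al: "\<alpha> \<in> mult_chars" and be: "\<beta> \<in> mult_chars" and ga: "\<gamma> \<in> mult_chars" and n: "\<nu> \<in> mult_chars"
    and bne: "\<beta> \<noteq> eps_char" and Bne: "chmul \<beta> (chinv \<gamma>) \<noteq> eps_char"
  shows "Ssum \<psi> (chmul \<alpha> \<nu>) \<beta> \<gamma> 1 / (1 - of_nat (card (UNIV::'a set))) =
    poch \<psi> (chmul (chinv \<beta>) \<gamma>) (chinv \<alpha>) / poch0 \<psi> \<gamma> (chinv \<alpha>) *
    (poch \<psi> (chmul \<alpha> (chinv \<gamma>)) \<nu> / poch0 \<psi> (chmul (chmul \<alpha> \<beta>) (chinv \<gamma>)) \<nu>)"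
proof -
  define Q :: complex where "Q = of_nat (card (UNIV::'a set))"
  define a where "a = chmul \<alpha> \<nu>"
  define B where "B = chmul (chinv \<beta>) \<gamma>"
  define A where "A = chmul \<alpha> (chinv \<gamma>)"
  define D where "D = chmul (chmul \<alpha> \<beta>) (chinv \<gamma>)"
  define E where "E = chmul (chinv a) B"
  have ac: "a \<in> mult_chars" unfolding a_def using al n by (rule chmul_in)
  have Bc: "B \<in> mult_chars" unfolding B_def using be ga by (simp add: chmul_in chinv_in)
  have Ac: "A \<in> mult_chars" unfolding A_def using al ga by (simp add: chmul_in chinv_in)
  have Dc: "D \<in> mult_chars" unfolding D_def using al be ga by (simp add: chmul_in chinv_in)
  have Ec: "E \<in> mult_chars" unfolding E_def using ac Bc by (simp add: chmul_in chinv_in)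
  have Anc: "chmul A \<nu> \<in> mult_chars" using Ac n by (rule chmul_in)
  have Dnc: "chmul D \<nu> \<in> mult_chars" using Dc n by (rule chmul_in)
  have Bne': "B \<noteq> eps_char" unfolding B_def fi5 chinv_eq_eps by (rule Bne)
  have Q1: "Q \<noteq> 1" using card_ge2[where 'a='a] by (simp add: Q_def)
  have Qnz: "Q \<noteq> 0" unfolding Q_def by (rule Q_nz)
  have qm: "of_nat (card (UNIV::'a set) - 1) = Q - 1" unfolding Q_def by (rule of_nat_qm1)
  have E_eq: "E = chinv (chmul D \<nu>)" unfolding E_def a_def B_def D_def fi1 ..
  have EB_eq: "chmul E \<beta> = chinv (chmul A \<nu>)" unfolding E_def a_def B_def A_def by (rule fi2[OF al be])
  have e3: "chmul B (chinv \<alpha>) = chinv D" unfolding B_def D_def by (rule fi3)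
  have e4: "chmul \<gamma> (chinv \<alpha>) = chinv A" unfolding A_def by (rule fi4)
  have B0: "B 0 = 0" by (rule mc_0[OF Bc])
  have sum_eq0: "(\<Sum>x\<in>UNIV. \<beta> x * B (1 - x) * a (inverse (1 - 1 * x))) = jac \<beta> E"
    unfolding jac_def E_def
    by (rule sum.cong[OF refl]) (simp add: chmul_def chinv_apply[OF ac] mult_ac)
  have sum_eq: "(\<Sum>x\<in>UNIV. \<beta> x * B (1 - x) * a (inverse (1 - 1 * x))) = jac E \<beta>"
    unfolding sum_eq0 by (rule jac_swap)
  have key: "gauss \<psi> E * gauss \<psi> \<beta> = - jac E \<beta> * gauss0 \<psi> (chmul E \<beta>)" by (rule gauss_key[OF psi Ec be bne])
  have S1: "Ssum \<psi> a \<beta> \<gamma> 1 = Kc \<psi> \<beta> \<gamma> * (Q - 1) * (- jac E \<beta>)"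
    using S_formula[OF psi ac be ga Bne'[unfolded B_def], of 1] B0 sum_eq unfolding B_def qm by simp
  define gcDn where "gcDn = gauss \<psi> (chinv (chmul D \<nu>))"
  define g0cAn where "g0cAn = gauss0 \<psi> (chinv (chmul A \<nu>))"
  define gcD where "gcD = gauss \<psi> (chinv D)"
  define g0cA where "g0cA = gauss0 \<psi> (chinv A)"
  define g0Dn where "g0Dn = gauss0 \<psi> (chmul D \<nu>)"
  define gAn where "gAn = gauss \<psi> (chmul A \<nu>)"
  define g0D where "g0D = gauss0 \<psi> D"
  define gA where "gA = gauss \<psi> A"
  define sD where "sD = D (-1)"
  define sA where "sA = A (-1)"
  define sn where "sn = \<nu> (-1)"
  have r1: "g0Dn * gcDn = sD * sn * Q"
    using gauss_refl[OF psi Dnc] unfolding g0Dn_def gcDn_def sD_def sn_def Q_def by (simp add: chmul_def)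
  have r2: "g0cAn * gAn = sA * sn * Q"
    using gauss_refl[OF psi chinv_in[OF Anc]] unfolding g0cAn_def gAn_def sA_def sn_def Q_def
    by (simp add: chinv_chinv chinv_m1[OF Anc] chmul_def)
  have r3: "g0D * gcD = sD * Q"
    using gauss_refl[OF psi Dc] unfolding g0D_def gcD_def sD_def Q_def by simp
  have r4: "g0cA * gA = sA * Q"
    using gauss_refl[OF psi chinv_in[OF Ac]] unfolding g0cA_def gA_def sA_def Q_def
    by (simp add: chinv_chinv chinv_m1[OF Ac])
  have nz: "sD \<noteq> 0" "sA \<noteq> 0" "sn \<noteq> 0" "g0Dn \<noteq> 0" "gAn \<noteq> 0" "g0D \<noteq> 0" "gA \<noteq> 0"
    "gauss \<psi> B \<noteq> 0" "gauss0 \<psi> \<gamma> \<noteq> 0" "gauss \<psi> \<beta> \<noteq> 0" "g0cAn \<noteq> 0" "g0cA \<noteq> 0"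
    unfolding sD_def sA_def sn_def g0Dn_def gAn_def g0D_def gA_def g0cAn_def g0cA_def
    using mc_m1_nz[OF Dc] mc_m1_nz[OF Ac] mc_m1_nz[OF n] gauss0_nz[OF psi Dnc] gauss_nz[OF psi Anc]
      gauss0_nz[OF psi Dc] gauss_nz[OF psi Ac] gauss_nz[OF psi Bc] gauss0_nz[OF psi ga] gauss_nz[OF psi be]
      gauss0_nz[OF psi chinv_in[OF Anc]] gauss0_nz[OF psi chinv_in[OF Ac]] by simp_all
  have jE: "jac E \<beta> = - gcDn * gauss \<psi> \<beta> / g0cAn"
    using key nz unfolding gcDn_def g0cAn_def E_eq[symmetric] EB_eq[symmetric] by (simp add: field_simps)
  have LHS: "Ssum \<psi> a \<beta> \<gamma> 1 / (1 - Q) = gauss0 \<psi> \<gamma> * gcDn / (gauss \<psi> B * g0cAn)"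
    unfolding S1 jE Kc_def B_def[symmetric] using nz Q1
    by (simp add: field_simps)
  have RHS: "poch \<psi> B (chinv \<alpha>) / poch0 \<psi> \<gamma> (chinv \<alpha>) * (poch \<psi> A \<nu> / poch0 \<psi> D \<nu>)
      = (gcD / gauss \<psi> B) / (g0cA / gauss0 \<psi> \<gamma>) * ((gAn / gA) / (g0Dn / g0D))"
    unfolding poch_def poch0_def e3 e4 gcD_def g0cA_def gAn_def gA_def g0Dn_def g0D_def by simp
  have gcDn_eq: "gcDn = sD * sn * Q / g0Dn" using r1 nz by (simp add: field_simps)
  have g0cAn_eq: "g0cAn = sA * sn * Q / gAn" using r2 nz by (simp add: field_simps)
  have gcD_eq: "gcD = sD * Q / g0D" using r3 nz by (simp add: field_simps)
  have g0cA_eq: "g0cA = sA * Q / gA" using r4 nz by (simp add: field_simps)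
  have "gauss0 \<psi> \<gamma> * gcDn / (gauss \<psi> B * g0cAn) = (gcD / gauss \<psi> B) / (g0cA / gauss0 \<psi> \<gamma>) * ((gAn / gA) / (g0Dn / g0D))"
    unfolding gcDn_eq g0cAn_eq gcD_eq g0cA_eq using nz Qnz by (simp add: field_simps)
  then show ?thesis using LHS RHS unfolding a_def B_def A_def D_def Q_def by simp
qed

end


lemma Ssum_zero: "Ssum \<psi> a b c (0::'a::{field,finite}) = 0"
  unfolding Ssum_def by (rule sum.neutral) (simp add: mc_0)

lemma Q_ne1: "(1 - of_nat (card (UNIV::'a::{field,finite} set)) :: complex) \<noteq> 0"
  using card_ge2[where 'a='a] by simp

lemma aux_sq: "(u::complex) \<noteq> 0 \<Longrightarrow> 1 / u^2 * (u * C * S) = C * (1 / u * S)"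
  by (simp add: power2_eq_square field_simps)

context
  fixes \<psi> :: "'a::{field,finite} \<Rightarrow> complex"
  assumes psi: "add_char \<psi>" "\<exists>x. \<psi> x \<noteq> 1"
begin

lemma L1:
  assumes al: "\<alpha> \<in> mult_chars" and b1: "\<beta>1 \<in> mult_chars" and b2: "\<beta>2 \<in> mult_chars"
    and g1: "\<gamma>1 \<in> mult_chars" and g2: "\<gamma>2 \<in> mult_chars"
    and bne: "\<beta>2 \<noteq> eps_char" and Bne: "chmul \<beta>2 (chinv \<gamma>2) \<noteq> eps_char"
  shows "appellF2 \<psi> \<alpha> \<beta>1 \<beta>2 \<gamma>1 \<gamma>2 z 1 =
          poch \<psi> (chmul (chinv \<beta>2) \<gamma>2) (chinv \<alpha>) / poch0 \<psi> \<gamma>2 (chinv \<alpha>) *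
          hyp3F2 \<psi> \<alpha> \<beta>1 (chmul \<alpha> (chinv \<gamma>2)) \<gamma>1 (chmul (chmul \<alpha> \<beta>2) (chinv \<gamma>2)) z"
proof -
  define Q :: complex where "Q = of_nat (card (UNIV::'a set))"
  define C where "C = poch \<psi> (chmul (chinv \<beta>2) \<gamma>2) (chinv \<alpha>) / poch0 \<psi> \<gamma>2 (chinv \<alpha>)"
  define A where "A = chmul \<alpha> (chinv \<gamma>2)"
  define D where "D = chmul (chmul \<alpha> \<beta>2) (chinv \<gamma>2)"
  have Q1: "1 - Q \<noteq> 0" unfolding Q_def by (rule Q_ne1)
  have Sv: "Ssum \<psi> (chmul \<alpha> \<nu>) \<beta>2 \<gamma>2 1 = (1 - Q) * C * (poch \<psi> A \<nu> / poch0 \<psi> D \<nu>)"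
    if n: "\<nu> \<in> mult_chars" for \<nu>
    using gauss_sum1[OF psi al b2 g2 n bne Bne] Q1 unfolding C_def A_def D_def Q_def
    by (simp add: field_simps)
  have "appellF2 \<psi> \<alpha> \<beta>1 \<beta>2 \<gamma>1 \<gamma>2 z 1 = 1 / (1 - Q)^2 *
    (\<Sum>\<nu>\<in>mult_chars. poch \<psi> \<alpha> \<nu> * poch \<psi> \<beta>1 \<nu> / (poch0 \<psi> \<gamma>1 \<nu> * poch0 \<psi> eps_char \<nu>) * \<nu> z
        * Ssum \<psi> (chmul \<alpha> \<nu>) \<beta>2 \<gamma>2 1)"
    unfolding Q_def by (rule F2_nu1[OF psi al])
  also have "\<dots> = 1 / (1 - Q)^2 * (\<Sum>\<nu>\<in>mult_chars. ((1 - Q) * C) *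
      (poch \<psi> \<alpha> \<nu> * poch \<psi> \<beta>1 \<nu> * poch \<psi> A \<nu> / (poch0 \<psi> eps_char \<nu> * poch0 \<psi> \<gamma>1 \<nu> * poch0 \<psi> D \<nu>) * \<nu> z))"
    by (rule arg_cong2[where f="(*)", OF refl], rule sum.cong[OF refl]) (simp add: Sv divide_inverse mult_ac)
  also have "\<dots> = C * (1 / (1 - Q) * (\<Sum>\<nu>\<in>mult_chars.
      poch \<psi> \<alpha> \<nu> * poch \<psi> \<beta>1 \<nu> * poch \<psi> A \<nu> / (poch0 \<psi> eps_char \<nu> * poch0 \<psi> \<gamma>1 \<nu> * poch0 \<psi> D \<nu>) * \<nu> z))"
    unfolding sum_distrib_left[symmetric] using Q1 by (rule aux_sq)
  finally show ?thesis unfolding hyp3F2_def C_def A_def D_def Q_def .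
qed

lemma pfaff_nu:
  assumes al: "\<alpha> \<in> mult_chars" and b1: "\<beta>1 \<in> mult_chars" and g1: "\<gamma>1 \<in> mult_chars" and n: "\<nu> \<in> mult_chars"
    and b1ne: "\<beta>1 \<noteq> eps_char" and Bne: "chmul \<beta>1 (chinv \<gamma>1) \<noteq> eps_char" and z1: "z \<noteq> 1"
  shows "\<nu> (1 - z) * Ssum \<psi> (chmul \<alpha> \<nu>) \<beta>1 \<gamma>1 z =
         chinv \<alpha> (1 - z) * Ssum \<psi> (chmul \<alpha> \<nu>) (chmul (chinv \<beta>1) \<gamma>1) \<gamma>1 (z / (z - 1))"
proof (cases "z = 0")
  case True then show ?thesis by (simp add: Ssum_zero)
next
  case False
  define a where "a = chmul \<alpha> \<nu>"
  define B where "B = chmul (chinv \<beta>1) \<gamma>1"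
  define w where "w = z / (z - 1)"
  have ac: "a \<in> mult_chars" unfolding a_def using al n by (rule chmul_in)
  have Bc: "B \<in> mult_chars" unfolding B_def using b1 g1 by (simp add: chmul_in chinv_in)
  have ne1: "chmul (chinv \<beta>1) \<gamma>1 \<noteq> eps_char" unfolding fi5 chinv_eq_eps by (rule Bne)
  have BB: "chmul (chinv B) \<gamma>1 = \<beta>1" unfolding B_def by (rule fi6[OF g1 b1])
  have ne2: "chmul (chinv B) \<gamma>1 \<noteq> eps_char" unfolding BB by (rule b1ne)
  have z1': "z - 1 \<noteq> 0" "1 - z \<noteq> 0" using z1 by auto
  have w0: "w \<noteq> 0" unfolding w_def using False z1' by simp
  have iw: "inverse w = 1 - inverse z" unfolding w_def using False z1' by (simp add: field_simps)
  have iw2: "1 - inverse w = inverse z" unfolding iw by simp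
  have K: "Kc \<psi> B \<gamma>1 = Kc \<psi> \<beta>1 \<gamma>1" unfolding Kc_def BB by (simp add: B_def mult.commute)
  define qm :: complex where "qm = of_nat (card (UNIV::'a set) - 1)"
  define dl :: complex where "dl = (if a = eps_char then 1 else 0)"
  define Xv where "Xv = \<beta>1 (inverse z) * B (1 - inverse z)"
  define T where "T = (\<Sum>x\<in>UNIV. \<beta>1 x * B (1 - x) * a (inverse (1 - z * x)))"
  have S1: "Ssum \<psi> a \<beta>1 \<gamma>1 z = Kc \<psi> \<beta>1 \<gamma>1 * qm * (qm * dl * Xv - T)"
    using S_formula[OF psi ac b1 g1 ne1 False] unfolding qm_def dl_def Xv_def T_def B_def .
  have T2: "(\<Sum>x\<in>UNIV. B x * \<beta>1 (1 - x) * a (inverse (1 - w * x))) = a (1 - z) * T"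
  proof -
    have bij: "bij_betw (\<lambda>x::'a. 1 - x) UNIV UNIV"
      by (rule bij_betw_byWitness[where f'="\<lambda>x. 1 - x"]) auto
    have "(\<Sum>x\<in>UNIV. B x * \<beta>1 (1 - x) * a (inverse (1 - w * x)))
        = (\<Sum>t\<in>UNIV. B (1 - t) * \<beta>1 (1 - (1 - t)) * a (inverse (1 - w * (1 - t))))"
      using sum.reindex_bij_betw[OF bij, of "\<lambda>x. B x * \<beta>1 (1 - x) * a (inverse (1 - w * x))"] by simp
    also have "\<dots> = (\<Sum>t\<in>UNIV. a (1 - z) * (\<beta>1 t * B (1 - t) * a (inverse (1 - z * t))))"
    proof (rule sum.cong[OF refl])
      fix t :: 'a
      have "1 - w * (1 - t) = (1 - z * t) / (1 - z)" unfolding w_def using z1' by (simp add: field_simps)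
      then have "inverse (1 - w * (1 - t)) = (1 - z) * inverse (1 - z * t)" by (simp add: divide_inverse mult.commute)
      then have "a (inverse (1 - w * (1 - t))) = a (1 - z) * a (inverse (1 - z * t))" by (simp add: mc_mult[OF ac])
      then show "B (1 - t) * \<beta>1 (1 - (1 - t)) * a (inverse (1 - w * (1 - t))) = a (1 - z) * (\<beta>1 t * B (1 - t) * a (inverse (1 - z * t)))"
        by (simp add: mult_ac)
    qed
    also have "\<dots> = a (1 - z) * T" unfolding T_def by (simp add: sum_distrib_left)
    finally show ?thesis .
  qed
  have S2: "Ssum \<psi> a B \<gamma>1 w = Kc \<psi> \<beta>1 \<gamma>1 * qm * (qm * dl * Xv - a (1 - z) * T)"
    using S_formula[OF psi ac Bc g1 ne2 w0] unfolding BB K T2 iw2 iw qm_def dl_def Xv_def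
    by (simp add: mult_ac)
  have anz: "\<alpha> (1 - z) \<noteq> 0" using mc_nz[OF al z1'(2)] .
  have a1z: "a (1 - z) = \<alpha> (1 - z) * \<nu> (1 - z)" unfolding a_def by (simp add: chmul_def)
  have ca: "chinv \<alpha> (1 - z) * a (1 - z) = \<nu> (1 - z)" unfolding a1z chinv_def using anz by simp
  have dl_eq: "dl * \<nu> (1 - z) = dl * chinv \<alpha> (1 - z)"
  proof (cases "a = eps_char")
    case True
    then have "a (1 - z) = 1" using z1'(2) by (simp add: eps_char_def)
    then have "\<nu> (1 - z) = chinv \<alpha> (1 - z)" using ca by simp
    then show ?thesis by simp
  qed (simp add: dl_def)
  have "\<nu> (1 - z) * Ssum \<psi> a \<beta>1 \<gamma>1 z = chinv \<alpha> (1 - z) * Ssum \<psi> a B \<gamma>1 w"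
    unfolding S1 S2
  proof -
    have "\<nu> (1 - z) * (qm * dl * Xv - T) = chinv \<alpha> (1 - z) * (qm * dl * Xv - a (1 - z) * T)"
      using dl_eq ca by (simp add: algebra_simps) (metis mult.assoc mult.commute)
    then show "\<nu> (1 - z) * (Kc \<psi> \<beta>1 \<gamma>1 * qm * (qm * dl * Xv - T)) =
        chinv \<alpha> (1 - z) * (Kc \<psi> \<beta>1 \<gamma>1 * qm * (qm * dl * Xv - a (1 - z) * T))"
      by (metis mult.left_commute)
  qed
  then show ?thesis unfolding a_def B_def w_def .
qed

end


theorem theorem3p13:
  fixes \<psi> :: "'a::{field,finite} \<Rightarrow> complex"
    and \<alpha> \<beta>1 \<beta>2 \<gamma>1 \<gamma>2 :: "'a \<Rightarrow> complex"
  assumes psi: "add_char \<psi>" "\<exists>x. \<psi> x \<noteq> 1"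
    and chars: "\<alpha> \<in> mult_chars" "\<beta>1 \<in> mult_chars" "\<beta>2 \<in> mult_chars"
      "\<gamma>1 \<in> mult_chars" "\<gamma>2 \<in> mult_chars"
  shows
    "(eps_char \<notin> {\<alpha>, \<beta>2, chmul \<beta>1 (chinv \<gamma>1), chmul \<beta>2 (chinv \<gamma>2)} \<longrightarrow>
       (\<forall>z::'a. appellF2 \<psi> \<alpha> \<beta>1 \<beta>2 \<gamma>1 \<gamma>2 z 1 =
          poch \<psi> (chmul (chinv \<beta>2) \<gamma>2) (chinv \<alpha>) / poch0 \<psi> \<gamma>2 (chinv \<alpha>) *
          hyp3F2 \<psi> \<alpha> \<beta>1 (chmul \<alpha> (chinv \<gamma>2)) \<gamma>1 (chmul (chmul \<alpha> \<beta>2) (chinv \<gamma>2)) z))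
     \<and>
     (eps_char \<notin> {\<alpha>, \<beta>1, \<beta>2, chmul \<beta>1 (chinv \<gamma>1), chmul \<beta>2 (chinv \<gamma>2)} \<longrightarrow>
       (\<forall>z::'a. z \<noteq> 1 \<longrightarrow>
          appellF2 \<psi> \<alpha> \<beta>1 \<beta>2 \<gamma>1 \<gamma>2 z (1 - z) =
          poch \<psi> (chmul (chinv \<beta>2) \<gamma>2) (chinv \<alpha>) / poch0 \<psi> \<gamma>2 (chinv \<alpha>) *
          chinv \<alpha> (1 - z) *
          hyp3F2 \<psi> \<alpha> (chmul (chinv \<beta>1) \<gamma>1) (chmul \<alpha> (chinv \<gamma>2)) \<gamma>1
            (chmul (chmul \<alpha> \<beta>2) (chinv \<gamma>2)) (z / (z - 1))))"
proof (intro conjI impI allI)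
  fix z :: 'a
  assume h: "eps_char \<notin> {\<alpha>, \<beta>2, chmul \<beta>1 (chinv \<gamma>1), chmul \<beta>2 (chinv \<gamma>2)}"
  then have "\<beta>2 \<noteq> eps_char" "chmul \<beta>2 (chinv \<gamma>2) \<noteq> eps_char" by auto
  then show "appellF2 \<psi> \<alpha> \<beta>1 \<beta>2 \<gamma>1 \<gamma>2 z 1 =
          poch \<psi> (chmul (chinv \<beta>2) \<gamma>2) (chinv \<alpha>) / poch0 \<psi> \<gamma>2 (chinv \<alpha>) *
          hyp3F2 \<psi> \<alpha> \<beta>1 (chmul \<alpha> (chinv \<gamma>2)) \<gamma>1 (chmul (chmul \<alpha> \<beta>2) (chinv \<gamma>2)) z"
    by (rule L1[OF psi chars])
next
  fix z :: 'a
  assume h: "eps_char \<notin> {\<alpha>, \<beta>1, \<beta>2, chmul \<beta>1 (chinv \<gamma>1), chmul \<beta>2 (chinv \<gamma>2)}"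
    and z1: "z \<noteq> 1"
  then have b1ne: "\<beta>1 \<noteq> eps_char" and b2ne: "\<beta>2 \<noteq> eps_char"
    and B1ne: "chmul \<beta>1 (chinv \<gamma>1) \<noteq> eps_char" and B2ne: "chmul \<beta>2 (chinv \<gamma>2) \<noteq> eps_char" by auto
  define B where "B = chmul (chinv \<beta>1) \<gamma>1"
  define w where "w = z / (z - 1)"
  define C where "C = poch \<psi> (chmul (chinv \<beta>2) \<gamma>2) (chinv \<alpha>) / poch0 \<psi> \<gamma>2 (chinv \<alpha>)"
  define Q :: complex where "Q = of_nat (card (UNIV::'a set))"
  have Bc: "B \<in> mult_chars" unfolding B_def using chars by (simp add: chmul_in chinv_in)
  have "appellF2 \<psi> \<alpha> \<beta>1 \<beta>2 \<gamma>1 \<gamma>2 z (1 - z) = 1 / (1 - Q)^2 *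
    (\<Sum>\<nu>\<in>mult_chars. poch \<psi> \<alpha> \<nu> * poch \<psi> \<beta>2 \<nu> / (poch0 \<psi> \<gamma>2 \<nu> * poch0 \<psi> eps_char \<nu>)
        * (\<nu> (1 - z) * Ssum \<psi> (chmul \<alpha> \<nu>) \<beta>1 \<gamma>1 z))"
    unfolding Q_def F2_nu2[OF psi chars(1)] by (simp add: mult.assoc)
  also have "\<dots> = 1 / (1 - Q)^2 *
    (\<Sum>\<nu>\<in>mult_chars. poch \<psi> \<alpha> \<nu> * poch \<psi> \<beta>2 \<nu> / (poch0 \<psi> \<gamma>2 \<nu> * poch0 \<psi> eps_char \<nu>)
        * (chinv \<alpha> (1 - z) * Ssum \<psi> (chmul \<alpha> \<nu>) B \<gamma>1 w))"
    unfolding B_def w_def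
    by (rule arg_cong2[where f="(*)", OF refl], rule sum.cong[OF refl])
       (simp add: pfaff_nu[OF psi chars(1) chars(2) chars(4) _ b1ne B1ne z1])
  also have "\<dots> = chinv \<alpha> (1 - z) * appellF2 \<psi> \<alpha> B \<beta>2 \<gamma>1 \<gamma>2 w 1"
    unfolding Q_def F2_nu2[OF psi chars(1)] sum_distrib_left
    by (simp add: mc_1 mult_ac)
  also have "appellF2 \<psi> \<alpha> B \<beta>2 \<gamma>1 \<gamma>2 w 1 = C * hyp3F2 \<psi> \<alpha> B (chmul \<alpha> (chinv \<gamma>2)) \<gamma>1 (chmul (chmul \<alpha> \<beta>2) (chinv \<gamma>2)) w"
    unfolding C_def by (rule L1[OF psi chars(1) Bc chars(3) chars(4) chars(5) b2ne B2ne])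
  finally show "appellF2 \<psi> \<alpha> \<beta>1 \<beta>2 \<gamma>1 \<gamma>2 z (1 - z) =
          poch \<psi> (chmul (chinv \<beta>2) \<gamma>2) (chinv \<alpha>) / poch0 \<psi> \<gamma>2 (chinv \<alpha>) *
          chinv \<alpha> (1 - z) *
          hyp3F2 \<psi> \<alpha> (chmul (chinv \<beta>1) \<gamma>1) (chmul \<alpha> (chinv \<gamma>2)) \<gamma>1
            (chmul (chmul \<alpha> \<beta>2) (chinv \<gamma>2)) (z / (z - 1))"
    unfolding C_def B_def w_def by (simp add: mult_ac)
qed


end
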